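(* Let $(X,\mathbf h,\Lambda_0,\widetilde B_0)$ be a quantum seed, let $(X',\mathbf h,\Lambda_1,\widetilde B_1)=\mu_1(X,\mathbf h,\Lambda_0,\widetilde B_0)$, let $j\in[2,n]$, and let $X''_j$ be the $j$-th cluster variable of $\mu_j(X',\mathbf h,\Lambda_1,\widetilde B_1)$ (i.e. $X''_j=\mu_j\mu_1(X_j)$). Let $X'_1$ be the first cluster variable of $\mu_1(X,\mathbf h,\Lambda_0,\widetilde B_0)$ and $X'_j$ the $j$-th cluster variable of $\mu_j(X,\mathbf h,\Lambda_0,\widetilde B_0)$. Then $$\mathbb{ZP}[X_1,X'_1,X_2^{\pm1},\dots,X_{j-1}^{\pm1},X_j,X''_j,X_{j+1}^{\pm1},\dots,X_n^{\pm1}]=\mathbb{ZP}[X_1,X'_1,X_2^{\pm1},\dots,X_{j-1}^{\pm1},X_j,X'_j,X_{j+1}^{\pm1},\dots,X_n^{\pm1}].$$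
   Context: Notation: $[a,b]=\{a,a+1,\dots,b\}$; $[x]_+=\max(x,0)$, applied entrywise to vectors; $e_1,\dots,e_m$ is the standard basis of $\mathbb Z^m$. Fix integers $m\ge n\ge 2$. A compatible pair $(\Lambda,\widetilde B)$ consists of an $m\times n$ integer matrix $\widetilde B=(b_{kl})$ and a skew-symmetric $m\times m$ integer matrix $\Lambda$ such that $\Lambda\widetilde B=-\begin{bmatrix}D\\0\end{bmatrix}$ for some $D=\mathrm{diag}(\tilde d_1,\dots,\tilde d_n)$ with all $\tilde d_k\in\mathbb Z_{>0}$. Write $\Lambda(a,b)=a^T\Lambda b$. Fix positive integers $d_1,\dots,d_n$ such that $d_k$ divides every entry of the $k$-th column $b^k$ of $\widetilde B$ (preserved under mutation); $\beta^k=\frac1{d_k}b^k$. The quantum torus $\mathcal T(\Lambda)$ is the $\mathbb Z[q^{\pm1/2}]$-algebra with basis $\{X(c)\mid c\in\mathbb Z^m\}$ and multiplication $X(c)X(d)=q^{\frac12\Lambda(c,d)}X(c+d)$; $\mathcal F$ is its skew field of fractions, $X_k=X(e_k)$. For $k\in[1,n]$, $\mathbf h_k=(h_{k,0},\dots,h_{k,d_k})$ with $h_{k,r}\in\mathbb Z[q^{\pm1/2}]$, $h_{k,r}=h_{k,d_k-r}$, $h_{k,0}=h_{k,d_k}=1$. A quantum seed $(X,\mathbf h,\Lambda,\widetilde B)$ consists of a compatible pair, $\mathbf h$, and a map $X:\mathbb Z^m\to\mathcal F$ with $X(c)X(d)=q^{\frac12\Lambda(c,d)}X(c+d)$. Mutation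 in direction $i$: $\mu_i(X,\mathbf h,\Lambda,\widetilde B)=(X',\mathbf h,E^T\Lambda E,E\widetilde BF)$ where $E_{kl}=\delta_{kl}$ ($l\neq i$), $E_{ii}=-1$, $E_{ki}=[-\varepsilon b_{ki}]_+$ ($k\ne i$), $F_{kl}=\delta_{kl}$ ($k\ne i$), $F_{ii}=-1$, $F_{il}=[\varepsilon b_{il}]_+$ ($l\ne i$), $\varepsilon\in\{\pm1\}$ arbitrary, and $X'$ is the map satisfying $X'(c)X'(d)=q^{\frac12\Lambda'(c,d)}X'(c+d)$ for $\Lambda'=E^T\Lambda E$, determined by $X'(e_k)=X(e_k)$ ($k\ne i$) and $X'(e_i)=\sum_{r=0}^{d_i}h_{i,r}X(r[\beta^i]_++(d_i-r)[-\beta^i]_+-e_i)$. $\mathbb{ZP}$ is the ring of Laurent polynomials in $X_{n+1},\dots,X_m$ with coefficients in $\mathbb Z[q^{\pm1/2}]$; for $Y_1,\dots,Y_s\in\mathcal F$, $\mathbb{ZP}[Y_1,\dots,Y_s]$ is the subring of $\mathcal F$ generated by $\mathbb{ZP}$ and the $Y_k$ (exponent $\pm1$ means both $Y$ and $Y^{-1}$ are adjoined). *)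

theory Defs
  imports Main
begin

text \<open>Vectors in Z^m are functions nat => int supported on [1,m];
  matrices are functions nat => nat => int (only entries with indices in range matter).\<close>

definition vec_in :: "nat \<Rightarrow> (nat \<Rightarrow> int) \<Rightarrow> bool" where
  "vec_in m c \<longleftrightarrow> (\<forall>k. (k = 0 \<or> m < k) \<longrightarrow> c k = 0)"

definition unitv :: "nat \<Rightarrow> nat \<Rightarrow> int" where
  "unitv i = (\<lambda>k. if k = i then 1 else 0)"

definition pos :: "int \<Rightarrow> int" where
  "pos x = max x 0"

definition bil :: "nat \<Rightarrow> (nat \<Rightarrow> nat \<Rightarrow> int) \<Rightarrow> (nat \<Rightarrow> int) \<Rightarrow> (nat \<Rightarrow> int) \<Rightarrow> int" where
  "bil m L a b = (\<Sum>k=1..m. \<Sum>l=1..m. a k * L k l * b l)"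

definition compatible_pair ::
  "nat \<Rightarrow> nat \<Rightarrow> (nat \<Rightarrow> nat \<Rightarrow> int) \<Rightarrow> (nat \<Rightarrow> nat \<Rightarrow> int) \<Rightarrow> bool" where
  "compatible_pair m n L B \<longleftrightarrow>
     (\<forall>k\<in>{1..m}. \<forall>l\<in>{1..m}. L k l = - L l k) \<and>
     (\<exists>dt :: nat \<Rightarrow> int. (\<forall>l\<in>{1..n}. dt l > 0) \<and>
        (\<forall>k\<in>{1..m}. \<forall>l\<in>{1..n}.
           (\<Sum>p=1..m. L k p * B p l) = (if k = l then - dt l else 0)))"

definition mutE :: "(nat \<Rightarrow> nat \<Rightarrow> int) \<Rightarrow> nat \<Rightarrow> int \<Rightarrow> nat \<Rightarrow> nat \<Rightarrow> int" where
  "mutE B i eps = (\<lambda>k l. if l \<noteq> i then (if k = l then 1 else 0)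
                         else if k = i then -1 else pos (- eps * B k i))"

definition mutF :: "(nat \<Rightarrow> nat \<Rightarrow> int) \<Rightarrow> nat \<Rightarrow> int \<Rightarrow> nat \<Rightarrow> nat \<Rightarrow> int" where
  "mutF B i eps = (\<lambda>k l. if k \<noteq> i then (if k = l then 1 else 0)
                         else if l = i then -1 else pos (eps * B i l))"

definition mut_Lambda :: "nat \<Rightarrow> (nat \<Rightarrow> nat \<Rightarrow> int) \<Rightarrow> (nat \<Rightarrow> nat \<Rightarrow> int) \<Rightarrow> nat \<Rightarrow> int
    \<Rightarrow> nat \<Rightarrow> nat \<Rightarrow> int" where
  "mut_Lambda m L B i eps = (\<lambda>k l. \<Sum>p=1..m. \<Sum>q=1..m.
       mutE B i eps p k * L p q * mutE B i eps q l)"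

definition mut_B :: "nat \<Rightarrow> nat \<Rightarrow> (nat \<Rightarrow> nat \<Rightarrow> int) \<Rightarrow> nat \<Rightarrow> int
    \<Rightarrow> nat \<Rightarrow> nat \<Rightarrow> int" where
  "mut_B m n B i eps = (\<lambda>k l. \<Sum>p=1..m. \<Sum>q=1..n.
       mutE B i eps k p * B p q * mutF B i eps q l)"

text \<open>Z[q^{+-1/2}] inside the ambient division ring, with v playing the role of q^{1/2}.\<close>
definition laurent :: "'f::division_ring \<Rightarrow> 'f set" where
  "laurent v = {(\<Sum>k\<in>K. of_int (a k) * v powi k) | K a. finite K}"

definition qtorus_rel :: "nat \<Rightarrow> (nat \<Rightarrow> nat \<Rightarrow> int) \<Rightarrow> 'f::division_ring \<Rightarrow>
    ((nat \<Rightarrow> int) \<Rightarrow> 'f) \<Rightarrow> bool" where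
  "qtorus_rel m L v X \<longleftrightarrow>
     (\<forall>c d. vec_in m c \<longrightarrow> vec_in m d \<longrightarrow>
        X c * X d = v powi (bil m L c d) * X (\<lambda>k. c k + d k))"

text \<open>x is an embedding of the quantum torus T(Lambda) (basis X(c), coefficients Z[q^{+-1/2}],
  q^{1/2} mapped to the central element v) into the division ring 'f: unital, multiplicative,
  v central, and the family v^k X(c) is Z-linearly independent (injectivity).
  By Ore's theorem the division subring generated by the image is the skew field of fractions.\<close>
definition qtorus_embedding :: "nat \<Rightarrow> (nat \<Rightarrow> nat \<Rightarrow> int) \<Rightarrow> 'f::division_ring \<Rightarrow>
    ((nat \<Rightarrow> int) \<Rightarrow> 'f) \<Rightarrow> bool" where
  "qtorus_embedding m L v X \<longleftrightarrow>
     qtorus_rel m L v X \<and> X (\<lambda>_. 0) = 1 \<and>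
     (\<forall>c. vec_in m c \<longrightarrow> v * X c = X c * v) \<and>
     (\<forall>C K (a :: (nat \<Rightarrow> int) \<Rightarrow> int \<Rightarrow> int). finite C \<longrightarrow> finite K \<longrightarrow> Ball C (vec_in m) \<longrightarrow>
        (\<Sum>c\<in>C. \<Sum>k\<in>K. of_int (a c k) * v powi k * X c) = 0 \<longrightarrow>
        (\<forall>c\<in>C. \<forall>k\<in>K. a c k = 0))"

definition beta :: "nat \<Rightarrow> (nat \<Rightarrow> nat \<Rightarrow> int) \<Rightarrow> (nat \<Rightarrow> int) \<Rightarrow> nat \<Rightarrow> nat \<Rightarrow> int" where
  "beta m B d i = (\<lambda>k. if 1 \<le> k \<and> k \<le> m then B k i div d i else 0)"

definition mut_var :: "nat \<Rightarrow> (nat \<Rightarrow> nat \<Rightarrow> int) \<Rightarrow> (nat \<Rightarrow> int) \<Rightarrow> (nat \<Rightarrow> nat \<Rightarrow> 'f::division_ring)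
    \<Rightarrow> ((nat \<Rightarrow> int) \<Rightarrow> 'f) \<Rightarrow> nat \<Rightarrow> 'f" where
  "mut_var m B d h X i = (\<Sum>r\<in>{0..nat (d i)}.
      h i r * X (\<lambda>k. int r * pos (beta m B d i k) + (d i - int r) * pos (- beta m B d i k)
                    - unitv i k))"

inductive_set gen_ring :: "'f::ring_1 set \<Rightarrow> 'f set" for S where
  base: "x \<in> S \<Longrightarrow> x \<in> gen_ring S"
| one: "1 \<in> gen_ring S"
| add: "x \<in> gen_ring S \<Longrightarrow> y \<in> gen_ring S \<Longrightarrow> x + y \<in> gen_ring S"
| neg: "x \<in> gen_ring S \<Longrightarrow> - x \<in> gen_ring S"
| mult: "x \<in> gen_ring S \<Longrightarrow> y \<in> gen_ring S \<Longrightarrow> x * y \<in> gen_ring S"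

text \<open>ZP: Laurent polynomials in the frozen variables X_{n+1},...,X_m with coefficients in
  Z[q^{+-1/2}], i.e. Z[q^{+-1/2}]-combinations of X(c) with c supported on [n+1,m].\<close>
definition ZP :: "nat \<Rightarrow> nat \<Rightarrow> 'f::division_ring \<Rightarrow> ((nat \<Rightarrow> int) \<Rightarrow> 'f) \<Rightarrow> 'f set" where
  "ZP m n v X = {(\<Sum>c\<in>C. p c * X c) | C p. finite C \<and>
       (\<forall>c\<in>C. vec_in m c \<and> (\<forall>k. 1 \<le> k \<and> k \<le> n \<longrightarrow> c k = 0) \<and> p c \<in> laurent v)}"

definition ZP_adj :: "nat \<Rightarrow> nat \<Rightarrow> 'f::division_ring \<Rightarrow> ((nat \<Rightarrow> int) \<Rightarrow> 'f) \<Rightarrow> 'f set \<Rightarrow> 'f set" where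
  "ZP_adj m n v X Ys = gen_ring (ZP m n v X \<union> Ys)"

end

theory Submission
  imports Defs "HOL-Library.Function_Algebras"
begin


definition sm :: "int \<Rightarrow> (nat \<Rightarrow> int) \<Rightarrow> nat \<Rightarrow> int" where
  "sm a c = (\<lambda>k. a * c k)"

lemma sm_apply[simp]: "sm a c k = a * c k" by (simp add: sm_def)
lemma fun_plus_apply[simp]: "(c + d) k = c k + (d::nat\<Rightarrow>int) k" by (simp add: plus_fun_def)
lemma fun_zero_apply[simp]: "(0::nat\<Rightarrow>int) k = 0" by (simp add: zero_fun_def)

lemma vec_in_add[intro]: "vec_in m c \<Longrightarrow> vec_in m d \<Longrightarrow> vec_in m (c + d)"
  by (simp add: vec_in_def)
lemma vec_in_diff[intro]: "vec_in m c \<Longrightarrow> vec_in m d \<Longrightarrow> vec_in m (c - d)"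
  by (simp add: vec_in_def)
lemma vec_in_uminus[intro]: "vec_in m c \<Longrightarrow> vec_in m (- c)"
  by (simp add: vec_in_def)
lemma vec_in_sm[intro]: "vec_in m c \<Longrightarrow> vec_in m (sm a c)"
  by (simp add: vec_in_def)
lemma vec_in_zero[intro]: "vec_in m 0"
  by (simp add: vec_in_def)
lemma vec_in_unitv[intro]: "k \<in> {1..m} \<Longrightarrow> vec_in m (unitv k)"
  by (auto simp add: vec_in_def unitv_def)

lemma bil_add1: "bil m L (a + b) c = bil m L a c + bil m L b c"
  unfolding bil_def by (simp add: algebra_simps sum.distrib)
lemma bil_add2: "bil m L c (a + b) = bil m L c a + bil m L c b"
  unfolding bil_def by (simp add: algebra_simps sum.distrib)
lemma bil_diff1: "bil m L (a - b) c = bil m L a c - bil m L b c"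
  unfolding bil_def by (simp add: algebra_simps sum_subtractf)
lemma bil_diff2: "bil m L c (a - b) = bil m L c a - bil m L c b"
  unfolding bil_def by (simp add: algebra_simps sum_subtractf)
lemma bil_uminus1: "bil m L (- a) c = - bil m L a c"
  unfolding bil_def by (simp add: sum_negf)
lemma bil_uminus2: "bil m L c (- a) = - bil m L c a"
  unfolding bil_def by (simp add: sum_negf)
lemma bil_sm1: "bil m L (sm x a) c = x * bil m L a c"
  unfolding bil_def by (simp add: sum_distrib_left mult.assoc)
lemma bil_sm2: "bil m L c (sm x a) = x * bil m L c a"
  unfolding bil_def by (simp add: sum_distrib_left mult_ac)
lemma bil_zero1[simp]: "bil m L 0 c = 0"
  unfolding bil_def by simp
lemma bil_zero2[simp]: "bil m L c 0 = 0"
  unfolding bil_def by simp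

lemmas bil_lin = bil_add1 bil_add2 bil_diff1 bil_diff2 bil_uminus1 bil_uminus2 bil_sm1 bil_sm2

lemma bil_cong:
  assumes "\<forall>k\<in>{1..m}. a k = a' k" "\<forall>k\<in>{1..m}. b k = b' k"
  shows "bil m L a b = bil m L a' b'"
  unfolding bil_def using assms by (intro sum.cong refl) auto

lemma bil_skew:
  assumes "\<forall>k\<in>{1..m}. \<forall>l\<in>{1..m}. L k l = - L l k"
  shows "bil m L a b = - bil m L b a"
proof -
  have "bil m L b a = (\<Sum>l=1..m. \<Sum>k=1..m. b k * L k l * a l)"
    unfolding bil_def by (rule sum.swap)
  also have "\<dots> = (\<Sum>l=1..m. \<Sum>k=1..m. - (a l * L l k * b k))"
  proof (intro sum.cong refl)
    fix l k assume "l \<in> {1..m}" "k \<in> {1..m}"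
    then have "L k l = - L l k" using assms by blast
    then show "b k * L k l * a l = - (a l * L l k * b k)" by simp
  qed
  also have "\<dots> = - (\<Sum>l=1..m. \<Sum>k=1..m. a l * L l k * b k)"
    by (simp only: sum_negf)
  finally show ?thesis unfolding bil_def by simp
qed

lemma bil_self:
  assumes "\<forall>k\<in>{1..m}. \<forall>l\<in>{1..m}. L k l = - L l k"
  shows "bil m L a a = 0"
  using bil_skew[OF assms, of a a] by simp

lemma bil_unit1:
  assumes "k \<in> {1..m}"
  shows "bil m L (unitv k) c = (\<Sum>l=1..m. L k l * c l)"
proof -
  have "bil m L (unitv k) c = (\<Sum>ka=1..m. if ka = k then (\<Sum>l=1..m. L k l * c l) else 0)"
    unfolding bil_def unitv_def by (intro sum.cong refl) auto
  also have "\<dots> = (\<Sum>l=1..m. L k l * c l)" using assms by (simp add: sum.delta)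
  finally show ?thesis .
qed




lemma inverse_commute:
  fixes x y :: "'f::division_ring"
  assumes "x * y = y * x"
  shows "inverse x * y = y * inverse x"
proof (cases "x = 0")
  case True then show ?thesis by simp
next
  case False
  have "inverse x * y = inverse x * y * (x * inverse x)" using False by simp
  also have "\<dots> = inverse x * (x * y) * inverse x" using assms by (simp add: mult.assoc)
  also have "\<dots> = y * inverse x" using False by (simp add: mult.assoc[symmetric])
  finally show ?thesis .
qed

lemma inverse_commute2:
  fixes x y :: "'f::division_ring"
  assumes "x * y = y * x"
  shows "x * inverse y = inverse y * x"
  using inverse_commute[of y x] assms by simp

lemma powi_commute:
  fixes x y :: "'f::division_ring"
  assumes "x * y = y * x"
  shows "x powi k * y = y * x powi k"
proof (cases "k \<ge> 0")
  case True then show ?thesis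
    using power_commuting_commutes[OF assms] by (simp add: power_int_def)
next
  case False
  have "inverse x * y = y * inverse x" using inverse_commute[OF assms] .
  then show ?thesis using False power_commuting_commutes by (simp add: power_int_def)
qed

lemma laurent_commute:
  fixes v y :: "'f::division_ring"
  assumes "p \<in> laurent v" "v * y = y * v"
  shows "p * y = y * p"
proof -
  obtain K a where p: "p = (\<Sum>k\<in>K. of_int (a k) * v powi k)"
    using assms(1) unfolding laurent_def by blast
  have "p * y = (\<Sum>k\<in>K. of_int (a k) * v powi k * y)" unfolding p by (simp add: sum_distrib_right)
  also have "\<dots> = (\<Sum>k\<in>K. y * (of_int (a k) * v powi k))"
  proof (intro sum.cong refl)
    fix k
    have "of_int (a k) * v powi k * y = of_int (a k) * (y * v powi k)"
      using powi_commute[OF assms(2)] by (simp add: mult.assoc)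
    also have "\<dots> = y * (of_int (a k) * v powi k)" by (metis mult.assoc mult_of_int_commute)
    finally show "of_int (a k) * v powi k * y = y * (of_int (a k) * v powi k)" .
  qed
  also have "\<dots> = y * p" unfolding p by (simp add: sum_distrib_left)
  finally show ?thesis .
qed

lemma laurent_powi: "v powi k \<in> laurent v"
  unfolding laurent_def by (rule CollectI, rule exI[of _ "{k}"], rule exI[of _ "\<lambda>_. 1"]) simp

lemma laurent_one: "1 \<in> laurent v"
  using laurent_powi[of v 0] by simp


lemma gen_ring_sub:
  assumes "S \<subseteq> gen_ring T"
  shows "gen_ring S \<subseteq> gen_ring T"
proof
  fix x assume "x \<in> gen_ring S"
  then show "x \<in> gen_ring T"
    by induct (use assms in \<open>auto intro: gen_ring.intros\<close>)
qed

lemma gen_ring_diff: "x \<in> gen_ring S \<Longrightarrow> y \<in> gen_ring S \<Longrightarrow> x - y \<in> gen_ring S"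
  using gen_ring.add[OF _ gen_ring.neg] by (metis diff_conv_add_uminus)

lemma gen_ring_power: "x \<in> gen_ring S \<Longrightarrow> x ^ k \<in> gen_ring S"
  by (induct k) (auto intro: gen_ring.intros)

lemma gen_ring_zero: "0 \<in> gen_ring S"
  using gen_ring_diff[OF gen_ring.one gen_ring.one] by simp

lemma gen_ring_sum: "(\<And>x. x \<in> I \<Longrightarrow> f x \<in> gen_ring S) \<Longrightarrow> sum f I \<in> gen_ring S"
  by (induct I rule: infinite_finite_induct) (auto intro: gen_ring.intros gen_ring_zero)

locale S =
  fixes m n j :: nat
    and L0 B0 :: "nat \<Rightarrow> nat \<Rightarrow> int"
    and d :: "nat \<Rightarrow> int"
    and h :: "nat \<Rightarrow> nat \<Rightarrow> 'f::division_ring"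
    and v :: 'f
    and X X' :: "(nat \<Rightarrow> int) \<Rightarrow> 'f"
    and eps :: int
  assumes n2: "2 \<le> n" and nm: "n \<le> m"
    and cp: "compatible_pair m n L0 B0"
    and dd: "\<forall>k\<in>{1..n}. d k > 0 \<and> (\<forall>p\<in>{1..m}. d k dvd B0 p k)"
    and hl: "\<forall>k\<in>{1..n}. \<forall>r\<in>{0..nat (d k)}. h k r \<in> laurent v \<and> h k r = h k (nat (d k) - r)"
    and h01: "\<forall>k\<in>{1..n}. h k 0 = 1 \<and> h k (nat (d k)) = 1"
    and emb: "qtorus_embedding m L0 v X"
    and epsv: "eps = 1 \<or> eps = -1"
    and rel': "qtorus_rel m (mut_Lambda m L0 B0 1 eps) v X'"
    and X'1: "X' (unitv 1) = mut_var m B0 d h X 1"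
    and X'k: "\<forall>k\<in>{1..m}. k \<noteq> 1 \<longrightarrow> X' (unitv k) = X (unitv k)"
    and jr: "j \<in> {2..n}"
begin

abbreviation "bl \<equiv> bil m L0"
abbreviation "L1 \<equiv> mut_Lambda m L0 B0 1 eps"
abbreviation "bl1 \<equiv> bil m L1"
abbreviation "e \<equiv> unitv"

lemma skew: "\<forall>k\<in>{1..m}. \<forall>l\<in>{1..m}. L0 k l = - L0 l k"
  using cp unfolding compatible_pair_def by blast

lemma bl_skew: "bl a b = - bl b a" by (rule bil_skew[OF skew])
lemma bl_self[simp]: "bl a a = 0" by (rule bil_self[OF skew])

lemma m1: "1 \<le> m" using n2 nm by simp
lemma j1: "j \<noteq> 1" "1 \<le> j" "j \<le> n" "j \<le> m" using jr nm by auto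
lemma e1_in[intro]: "vec_in m (e 1)" using m1 by auto
lemma ej_in[intro]: "vec_in m (e j)" using j1 by auto

lemma e_apply: "e i k = (if k = i then 1 else 0)" by (simp add: unitv_def)

lemma vne: "v \<noteq> 0"
proof
  assume v0: "v = 0"
  have lin: "\<forall>C K (a :: (nat \<Rightarrow> int) \<Rightarrow> int \<Rightarrow> int). finite C \<longrightarrow> finite K \<longrightarrow> Ball C (vec_in m) \<longrightarrow>
        (\<Sum>c\<in>C. \<Sum>k\<in>K. of_int (a c k) * v powi k * X c) = 0 \<longrightarrow>
        (\<forall>c\<in>C. \<forall>k\<in>K. a c k = 0)" using emb unfolding qtorus_embedding_def by blast
  have s: "(\<Sum>c\<in>{0::nat\<Rightarrow>int}. \<Sum>k\<in>{1::int}. of_int ((\<lambda>_ _. 1::int) c k) * v powi k * X c) = (0::'f)"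
    using v0 by simp
  have vin: "Ball {0::nat\<Rightarrow>int} (vec_in m)" by auto
  have "\<forall>c\<in>{0::nat\<Rightarrow>int}. \<forall>k\<in>{1::int}. (\<lambda>_ _. 1::int) c k = 0"
    using lin[THEN spec[of _ "{0::nat\<Rightarrow>int}"], THEN spec[of _ "{1::int}"], THEN spec[of _ "\<lambda>_ _. 1::int"]] s vin
    by blast
  then have "(1::int) = 0" by simp
  then show False by simp
qed

lemma vpow_add: "v powi a * v powi b = v powi (a + b)"
  using power_int_add[of v a b] vne by simp

lemma X0: "X 0 = 1"
proof -
  have "X (\<lambda>_. 0) = 1" using emb unfolding qtorus_embedding_def by blast
  then show ?thesis by (simp add: zero_fun_def)
qed

lemma Xmul: "vec_in m c \<Longrightarrow> vec_in m c' \<Longrightarrow> X c * X c' = v powi (bl c c') * X (c + c')"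
proof -
  assume a: "vec_in m c" "vec_in m c'"
  have "qtorus_rel m L0 v X" using emb unfolding qtorus_embedding_def by blast
  then have "X c * X c' = v powi (bl c c') * X (\<lambda>k. c k + c' k)" using a unfolding qtorus_rel_def by blast
  then show ?thesis by (simp add: plus_fun_def)
qed

lemma vX: "vec_in m c \<Longrightarrow> v * X c = X c * v"
  using emb unfolding qtorus_embedding_def by blast

lemma vpX: "vec_in m c \<Longrightarrow> v powi k * X c = X c * v powi k"
  by (rule powi_commute[OF vX])

lemma Xinv1: "vec_in m c \<Longrightarrow> X c * X (- c) = 1"
proof -
  assume a: "vec_in m c"
  have b: "vec_in m (- c)" using a by auto
  show ?thesis using Xmul[OF a b] X0 by (simp add: bil_uminus2)
qed
lemma Xinv2: "vec_in m c \<Longrightarrow> X (- c) * X c = 1"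
  using Xinv1[of "- c"] by auto
lemma Xnz: "vec_in m c \<Longrightarrow> X c \<noteq> 0"
  using Xinv1 by force
lemma Xinverse: "vec_in m c \<Longrightarrow> inverse (X c) = X (- c)"
  using Xinv1 inverse_unique by blast

lemma Xswap: "vec_in m a \<Longrightarrow> vec_in m b \<Longrightarrow> X a * X b = v powi (2 * bl a b) * (X b * X a)"
proof -
  assume a: "vec_in m a" and b: "vec_in m b"
  have "X b * X a = v powi (- bl a b) * X (a + b)" using Xmul[OF b a] bl_skew[of b a] by (simp add: add.commute)
  then have "v powi (2 * bl a b) * (X b * X a) = v powi (bl a b) * X (a + b)"
    by (simp add: mult.assoc[symmetric] vpow_add)
  then show ?thesis using Xmul[OF a b] by simp
qed

lemma Xpow: "vec_in m c \<Longrightarrow> X c ^ k = X (sm (int k) c)"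
proof (induct k)
  case 0 then show ?case using X0 by (simp add: sm_def zero_fun_def)
next
  case (Suc k)
  have "X c ^ Suc k = X c ^ k * X c" by (simp only: power_Suc2)
  also have "\<dots> = X (sm (int k) c) * X c" by (simp only: Suc(1)[OF Suc(2)])
  also have "\<dots> = X (sm (int k) c + c)" using Xmul[of "sm (int k) c" c] Suc(2) by (simp add: vec_in_sm bil_sm1)
  also have "sm (int k) c + c = sm (int (Suc k)) c" by (rule ext) (simp add: algebra_simps)
  finally show ?case .
qed

end



context S begin

definition dt where "dt = (SOME dt. (\<forall>l\<in>{1..n}. dt l > 0) \<and>
        (\<forall>k\<in>{1..m}. \<forall>l\<in>{1..n}. (\<Sum>p=1..m. L0 k p * B0 p l) = (if k = l then - dt l else 0)))"

lemma dt_prop: "(\<forall>l\<in>{1..n}. dt l > 0) \<and>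
        (\<forall>k\<in>{1..m}. \<forall>l\<in>{1..n}. (\<Sum>p=1..m. L0 k p * B0 p l) = (if k = l then - dt l else 0))"
proof -
  have "\<exists>dt. (\<forall>l\<in>{1..n}. dt l > 0) \<and>
        (\<forall>k\<in>{1..m}. \<forall>l\<in>{1..n}. (\<Sum>p=1..m. L0 k p * B0 p l) = (if k = l then - dt l else 0))"
    using cp unfolding compatible_pair_def by blast
  then show ?thesis unfolding dt_def by (rule someI_ex)
qed

abbreviation "be i \<equiv> beta m B0 d i"

lemma be_apply: "be i k = (if 1 \<le> k \<and> k \<le> m then B0 k i div d i else 0)"
  by (simp add: beta_def)

lemma d_pos: "i \<in> {1..n} \<Longrightarrow> d i > 0" using dd by blast

lemma B_be: "i \<in> {1..n} \<Longrightarrow> k \<in> {1..m} \<Longrightarrow> B0 k i = d i * be i k"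
  using dd by (auto simp: be_apply)

lemma be_in[intro]: "vec_in m (be i)" by (simp add: vec_in_def be_apply)

lemma in_m: "i \<in> {1..n} \<Longrightarrow> i \<in> {1..m}" using nm by auto

lemma bl_col: assumes i: "i \<in> {1..n}" shows "d i * bl x (be i) = - x i * dt i"
proof -
  have "d i * bl x (be i) = (\<Sum>k=1..m. \<Sum>l=1..m. x k * (L0 k l * (d i * be i l)))"
    unfolding bil_def by (simp add: sum_distrib_left mult_ac)
  also have "\<dots> = (\<Sum>k=1..m. x k * (\<Sum>l=1..m. L0 k l * B0 l i))"
    using i by (simp add: sum_distrib_left B_be)
  also have "\<dots> = (\<Sum>k=1..m. x k * (if k = i then - dt i else 0))"
    using dt_prop i by (intro sum.cong refl) simp
  also have "\<dots> = - x i * dt i"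
    using in_m[OF i] by (simp add: if_distrib[of "\<lambda>y. x _ * y"] sum.delta cong: if_cong)
  finally show ?thesis .
qed

lemma bl_be: assumes i: "i \<in> {1..n}" shows "bl x (be i) = x i * bl (e i) (be i)"
proof -
  have a: "d i * bl (e i) (be i) = - dt i" using bl_col[OF i, of "e i"] by (simp add: e_apply)
  have "d i * (x i * bl (e i) (be i)) = x i * (d i * bl (e i) (be i))" by (simp add: mult_ac)
  then have "d i * bl x (be i) = d i * (x i * bl (e i) (be i))"
    using bl_col[OF i, of x] a by simp
  then show ?thesis using d_pos[OF i] by simp
qed

lemma bl_ee_neg: assumes i: "i \<in> {1..n}" shows "bl (e i) (be i) < 0"
proof -
  have a: "d i * bl (e i) (be i) < 0" using bl_col[OF i, of "e i"] dt_prop i by (simp add: e_apply)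
  show ?thesis using a d_pos[OF i] by (simp add: mult_less_0_iff)
qed

lemma bl_be_rev: assumes i: "i \<in> {1..n}" shows "bl (be i) x = - x i * bl (e i) (be i)"
  using bl_be[OF i, of x] bl_skew[of "be i" x] by simp

lemma be_diag: assumes i: "i \<in> {1..n}" shows "be i i = 0"
proof -
  have "be i i * bl (e i) (be i) = 0" using bl_be[OF i, of "be i"] by simp
  then show ?thesis using bl_ee_neg[OF i] by simp
qed

lemma B_diag: assumes i: "i \<in> {1..n}" shows "B0 i i = 0"
  using B_be[OF i in_m[OF i]] be_diag[OF i] by simp

lemma i1: "1 \<in> {1..n}" using n2 by auto
lemma ij: "j \<in> {1..n}" using jr by auto

abbreviation "\<beta> \<equiv> be 1"
abbreviation "\<eta> \<equiv> be j"
abbreviation "t \<equiv> be j 1"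

lemma beta1: "\<beta> 1 = 0" using be_diag[OF i1] .
lemma etaj: "\<eta> j = 0" using be_diag[OF ij] .

lemma sign_rel: "\<beta> j * bl (e j) \<eta> = - t * bl (e 1) \<beta>"
proof -
  have "bl \<beta> \<eta> = \<beta> j * bl (e j) \<eta>" using bl_be[OF ij] .
  moreover have "bl \<eta> \<beta> = t * bl (e 1) \<beta>" using bl_be[OF i1] .
  ultimately show ?thesis using bl_skew[of \<beta> \<eta>] by simp
qed

lemma tpos: "t > 0 \<Longrightarrow> \<beta> j < 0"
proof -
  assume a: "t > 0"
  have n1: "bl (e 1) \<beta> < 0" "bl (e j) \<eta> < 0" using bl_ee_neg[OF i1] bl_ee_neg[OF ij] by auto
  then have "- t * bl (e 1) \<beta> > 0" using a by (simp add: mult_pos_neg)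
  then have "\<beta> j * bl (e j) \<eta> > 0" using sign_rel by simp
  then show ?thesis using n1 by (simp add: zero_less_mult_iff)
qed

lemma tneg: "t < 0 \<Longrightarrow> \<beta> j > 0"
proof -
  assume a: "t < 0"
  have n1: "bl (e 1) \<beta> < 0" "bl (e j) \<eta> < 0" using bl_ee_neg[OF i1] bl_ee_neg[OF ij] by auto
  then have "- t * bl (e 1) \<beta> < 0" using a by (simp add: mult_neg_neg)
  then have "\<beta> j * bl (e j) \<eta> < 0" using sign_rel by simp
  then show ?thesis using n1 by (simp add: mult_less_0_iff)
qed

end



lemma pos_mult: "(a::int) > 0 \<Longrightarrow> pos (a * x) = a * pos x"
  by (simp add: pos_def max_def mult_le_0_iff)

lemma pos_neg: "pos (- x) = pos x - (x::int)"
  by (simp add: pos_def max_def)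

lemma key_pos:
  fixes x t eps :: int
  assumes "eps = 1 \<or> eps = -1" "t \<noteq> 0"
  shows "x * pos (eps * t) + pos (- eps * x) * t = t * pos (- (if t > 0 then -1 else 1) * x)"
  using assms by (cases "eps = 1"; cases "t > 0"; cases "x \<ge> 0") (auto simp: pos_def max_def algebra_simps)

lemma sum4_swap:
  "(\<Sum>k\<in>A. \<Sum>l\<in>A. \<Sum>p\<in>A. \<Sum>q\<in>A. F k l p q) = (\<Sum>p\<in>A. \<Sum>q\<in>A. \<Sum>k\<in>A. \<Sum>l\<in>A. (F k l p q :: int))"
proof -
  have "(\<Sum>k\<in>A. \<Sum>l\<in>A. \<Sum>p\<in>A. \<Sum>q\<in>A. F k l p q) = (\<Sum>k\<in>A. \<Sum>p\<in>A. \<Sum>l\<in>A. \<Sum>q\<in>A. F k l p q)"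
    by (rule sum.cong[OF refl], rule sum.swap)
  also have "\<dots> = (\<Sum>p\<in>A. \<Sum>k\<in>A. \<Sum>l\<in>A. \<Sum>q\<in>A. F k l p q)" by (rule sum.swap)
  also have "\<dots> = (\<Sum>p\<in>A. \<Sum>k\<in>A. \<Sum>q\<in>A. \<Sum>l\<in>A. F k l p q)"
    by (rule sum.cong[OF refl], rule sum.cong[OF refl], rule sum.swap)
  also have "\<dots> = (\<Sum>p\<in>A. \<Sum>q\<in>A. \<Sum>k\<in>A. \<Sum>l\<in>A. F k l p q)"
    by (rule sum.cong[OF refl], rule sum.swap)
  finally show ?thesis .
qed

context S begin

definition Ev :: "int \<Rightarrow> (nat \<Rightarrow> int) \<Rightarrow> nat \<Rightarrow> int" where
  "Ev s c = (\<lambda>k. if k = 1 then - c 1 else c k + c 1 * (d 1 * pos (- s * \<beta> k)))"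

lemma Ev_apply: "Ev s c k = (if k = 1 then - c 1 else c k + c 1 * (d 1 * pos (- s * \<beta> k)))"
  by (simp add: Ev_def)

lemma beta_out: "k = 0 \<or> m < k \<Longrightarrow> be i k = 0" by (auto simp: be_apply)

lemma Ev_in[intro]: "vec_in m c \<Longrightarrow> vec_in m (Ev s c)"
  unfolding vec_in_def Ev_apply using beta_out[of _ 1] by (auto simp: pos_def)

lemma Ev_add: "Ev s (a + b) = Ev s a + Ev s b"
  by (rule ext) (simp add: Ev_apply algebra_simps)
lemma Ev_diff: "Ev s (a - b) = Ev s a - Ev s b"
  by (rule ext) (simp add: Ev_apply algebra_simps)
lemma Ev_sm: "Ev s (sm x a) = sm x (Ev s a)"
  by (rule ext) (simp add: Ev_apply algebra_simps)
lemma Ev_fix: "c 1 = 0 \<Longrightarrow> Ev s c = c"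
  by (rule ext) (simp add: Ev_apply)
lemma Ev_zero: "Ev s 0 = 0"
  by (rule ext) (simp add: Ev_apply)

definition eps0 :: int where "eps0 = (if t > 0 then -1 else 1)"

lemma Ev_j: "t \<noteq> 0 \<Longrightarrow> Ev eps0 c j = c j"
proof -
  assume t: "t \<noteq> 0"
  have "pos (- eps0 * \<beta> j) = 0"
  proof (cases "t > 0")
    case True then show ?thesis using tpos by (simp add: eps0_def pos_def)
  next
    case False then have "t < 0" using t by simp
    then show ?thesis using tneg by (simp add: eps0_def pos_def)
  qed
  then show ?thesis using j1 by (simp add: Ev_apply)
qed

lemma d1_pos: "d 1 > 0" using d_pos[OF i1] .
lemma dj_pos: "d j > 0" using d_pos[OF ij] .

lemma Ev_eps_inv: "bl (Ev 1 c) (Ev 1 c') = bl (Ev (-1) c) (Ev (-1) c')"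
proof -
  have sh: "Ev 1 x = Ev (-1) x - sm (x 1 * d 1) \<beta>" for x
    using beta1 by (intro ext) (simp add: Ev_apply pos_neg algebra_simps)
  define a where "a = Ev (-1) c"
  define b where "b = Ev (-1) c'"
  have a1: "a 1 = - c 1" "b 1 = - c' 1" by (simp_all add: a_def b_def Ev_apply)
  have "bl (Ev 1 c) (Ev 1 c') = bl (a - sm (c 1 * d 1) \<beta>) (b - sm (c' 1 * d 1) \<beta>)"
    using sh a_def b_def by simp
  also have "\<dots> = bl a b - (c' 1 * d 1) * bl a \<beta> - (c 1 * d 1) * bl \<beta> b"
    by (simp add: bil_lin algebra_simps)
  also have "\<dots> = bl a b"
    using bl_be[OF i1, of a] bl_be_rev[OF i1, of b] a1 by (simp add: algebra_simps)
  finally show ?thesis using a_def b_def by simp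
qed

lemma Ev_eps_inv2: "s = 1 \<or> s = -1 \<Longrightarrow> s' = 1 \<or> s' = -1 \<Longrightarrow>
   bl (Ev s c) (Ev s c') = bl (Ev s' c) (Ev s' c')"
  using Ev_eps_inv by auto

lemma mutE_sum:
  assumes p: "p \<in> {1..m}"
  shows "(\<Sum>k=1..m. mutE B0 1 eps p k * c k) = Ev eps c p"
proof -
  have f: "finite {1..m}" "1 \<in> {1..m}" using m1 by auto
  have "(\<Sum>k=1..m. mutE B0 1 eps p k * c k) = mutE B0 1 eps p 1 * c 1 +
        (\<Sum>k\<in>{1..m}-{1}. mutE B0 1 eps p k * c k)"
    by (rule sum.remove[OF f])
  also have "(\<Sum>k\<in>{1..m}-{1}. mutE B0 1 eps p k * c k) = (\<Sum>k\<in>{1..m}-{1}. if p = k then c k else 0)"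
    by (intro sum.cong refl) (auto simp: mutE_def)
  also have "\<dots> = (if p \<in> {1..m}-{1} then c p else 0)" by (simp add: sum.delta)
  finally have *: "(\<Sum>k=1..m. mutE B0 1 eps p k * c k) =
     mutE B0 1 eps p 1 * c 1 + (if p \<in> {1..m}-{1} then c p else 0)" .
  show ?thesis
  proof (cases "p = 1")
    case True then show ?thesis using * by (simp add: mutE_def Ev_apply)
  next
    case False
    have "pos (- eps * B0 p 1) = d 1 * pos (- eps * \<beta> p)"
      using B_be[OF i1 p] pos_mult[OF d1_pos, of "- eps * \<beta> p"] by (simp add: algebra_simps)
    then show ?thesis using * False p by (simp add: mutE_def Ev_apply algebra_simps)
  qed
qed

lemma bl1_Ev: "bl1 c c' = bl (Ev eps c) (Ev eps c')"
proof -
  let ?E = "mutE B0 1 eps"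
  have "bl1 c c' = (\<Sum>k=1..m. \<Sum>l=1..m. \<Sum>p=1..m. \<Sum>q=1..m. c k * (?E p k * L0 p q * ?E q l) * c' l)"
    unfolding bil_def mut_Lambda_def by (simp add: sum_distrib_left sum_distrib_right)
  also have "\<dots> = (\<Sum>p=1..m. \<Sum>q=1..m. \<Sum>k=1..m. \<Sum>l=1..m. c k * (?E p k * L0 p q * ?E q l) * c' l)"
    by (rule sum4_swap)
  also have "\<dots> = (\<Sum>p=1..m. \<Sum>q=1..m. (\<Sum>k=1..m. ?E p k * c k) * L0 p q * (\<Sum>l=1..m. ?E q l * c' l))"
    by (simp add: sum_distrib_left sum_distrib_right mult_ac)
  also have "\<dots> = (\<Sum>p=1..m. \<Sum>q=1..m. Ev eps c p * L0 p q * Ev eps c' q)"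
  proof (intro sum.cong refl)
    fix p q assume "p \<in> {1..m}" "q \<in> {1..m}"
    then show "(\<Sum>k=1..m. ?E p k * c k) * L0 p q * (\<Sum>l=1..m. ?E q l * c' l) = Ev eps c p * L0 p q * Ev eps c' q"
      by (simp only: mutE_sum)
  qed
  finally show ?thesis unfolding bil_def .
qed

lemma bl1_E0: "bl1 c c' = bl (Ev eps0 c) (Ev eps0 c')"
  using bl1_Ev Ev_eps_inv2[of eps eps0] epsv by (simp add: eps0_def)

lemma bl1_fix: "c 1 = 0 \<Longrightarrow> c' 1 = 0 \<Longrightarrow> bl1 c c' = bl c c'"
  using bl1_Ev by (simp add: Ev_fix)

end



lemma beta_apply: "beta m B d i k = (if 1 \<le> k \<and> k \<le> m then B k i div d i else 0)"
  by (simp add: beta_def)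

context S begin

lemma mutB_col:
  assumes k: "k \<in> {1..m}"
  shows "mut_B m n B0 1 eps k j = (if k = 1 then - B0 1 j
           else B0 k j + B0 k 1 * pos (eps * B0 1 j) + pos (- eps * B0 k 1) * B0 1 j)"
proof -
  let ?E = "mutE B0 1 eps" and ?F = "mutF B0 1 eps"
  define G where "G p = B0 p j + B0 p 1 * pos (eps * B0 1 j)" for p
  have fn: "finite {1..n}" "1 \<in> {1..n}" using n2 by auto
  have fm: "finite {1..m}" "1 \<in> {1..m}" using m1 by auto
  have inner: "(\<Sum>q=1..n. ?E k p * B0 p q * ?F q j) = ?E k p * G p" for p
  proof -
    have "(\<Sum>q=1..n. ?E k p * B0 p q * ?F q j) = ?E k p * (\<Sum>q=1..n. B0 p q * ?F q j)"
      by (simp add: sum_distrib_left mult.assoc)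
    also have "(\<Sum>q=1..n. B0 p q * ?F q j) = B0 p 1 * ?F 1 j + (\<Sum>q\<in>{1..n}-{1}. B0 p q * ?F q j)"
      by (rule sum.remove[OF fn])
    also have "(\<Sum>q\<in>{1..n}-{1}. B0 p q * ?F q j) = (\<Sum>q\<in>{1..n}-{1}. if q = j then B0 p j else 0)"
      by (intro sum.cong refl) (auto simp: mutF_def)
    also have "\<dots> = B0 p j" using j1 by (simp add: sum.delta)
    finally show ?thesis using j1 by (simp add: G_def mutF_def algebra_simps)
  qed
  have "mut_B m n B0 1 eps k j = (\<Sum>p=1..m. ?E k p * G p)"
    unfolding mut_B_def by (rule sum.cong[OF refl], rule inner)
  also have "\<dots> = ?E k 1 * G 1 + (\<Sum>p\<in>{1..m}-{1}. ?E k p * G p)"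
    by (rule sum.remove[OF fm])
  also have "(\<Sum>p\<in>{1..m}-{1}. ?E k p * G p) = (\<Sum>p\<in>{1..m}-{1}. if k = p then G k else 0)"
    by (intro sum.cong refl) (auto simp: mutE_def)
  also have "\<dots> = (if k \<in> {1..m}-{1} then G k else 0)" by (simp add: sum.delta')
  finally have *: "mut_B m n B0 1 eps k j = ?E k 1 * G 1 + (if k \<in> {1..m}-{1} then G k else 0)" .
  have G1: "G 1 = B0 1 j" using B_diag[OF i1] by (simp add: G_def)
  show ?thesis using * k G1 by (auto simp: mutE_def G_def algebra_simps)
qed

abbreviation "B1 \<equiv> mut_B m n B0 1 eps"
abbreviation "\<eta>' \<equiv> beta m B1 d j"

lemma eta'_raw: "\<eta>' k = (if 1 \<le> k \<and> k \<le> m then B1 k j div d j else 0)"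
  by (rule beta_apply)

lemma eta'_apply: "\<eta>' k = (if 1 \<le> k \<and> k \<le> m then
    (if k = 1 then - t else \<eta> k + d 1 * (\<beta> k * pos (eps * t) + pos (- eps * \<beta> k) * t)) else 0)"
proof (cases "1 \<le> k \<and> k \<le> m")
  case False then show ?thesis by (simp only: beta_apply[of m B1] if_not_P[OF False] if_False)
next
  case True
  then have k: "k \<in> {1..m}" by simp
  have b1j: "B0 1 j = d j * t" using B_be[OF ij] m1 by simp
  have bkj: "B0 k j = d j * \<eta> k" using B_be[OF ij k] .
  have bk1: "B0 k 1 = d 1 * \<beta> k" using B_be[OF i1 k] .
  have p1: "pos (eps * B0 1 j) = d j * pos (eps * t)"
    using pos_mult[OF dj_pos, of "eps * t"] b1j by (simp add: algebra_simps)
  have p2: "pos (- eps * B0 k 1) = d 1 * pos (- eps * \<beta> k)"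
    using pos_mult[OF d1_pos, of "- eps * \<beta> k"] bk1 by (simp add: algebra_simps)
  have B1e: "B1 k j = d j * (if k = 1 then - t else \<eta> k + d 1 * (\<beta> k * pos (eps * t) + pos (- eps * \<beta> k) * t))"
    using mutB_col[OF k] b1j bkj bk1 p1 p2 by (simp add: algebra_simps)
  show ?thesis unfolding eta'_raw[of k] B1e using True dj_pos by (simp only: if_True nonzero_mult_div_cancel_left)
qed

lemma eta'_in[intro]: "vec_in m \<eta>'" unfolding vec_in_def eta'_apply by simp

lemma eta'_1: "\<eta>' 1 = - t" unfolding eta'_apply using m1 by simp

lemma eta_apply_t: "\<eta> 1 = t" by simp

lemma eta'_t0: "t = 0 \<Longrightarrow> \<eta>' = \<eta>"
proof (rule ext)
  fix k assume t: "t = 0"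
  show "\<eta>' k = \<eta> k"
  proof (cases "1 \<le> k \<and> k \<le> m")
    case True then show ?thesis unfolding eta'_apply using t by (auto simp: pos_def)
  next
    case False then show ?thesis by (simp only: eta'_apply be_apply if_not_P[OF False] if_False)
  qed
qed

lemma Ev_eta': assumes t: "t \<noteq> 0" shows "Ev eps0 \<eta>' = \<eta>"
proof (rule ext)
  fix k
  show "Ev eps0 \<eta>' k = \<eta> k"
  proof (cases "1 \<le> k \<and> k \<le> m")
    case True
    show ?thesis
    proof (cases "k = 1")
      case True then show ?thesis unfolding Ev_apply eta'_1 by simp
    next
      case False
      have "\<beta> k * pos (eps * t) + pos (- eps * \<beta> k) * t = t * pos (- eps0 * \<beta> k)"
        using key_pos[OF epsv t, of "\<beta> k"] by (simp add: eps0_def)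
      then show ?thesis unfolding Ev_apply eta'_apply using True False by (simp add: algebra_simps)
    qed
  next
    case False
    then have "\<beta> k = 0" "\<eta> k = 0" "\<eta>' k = 0" unfolding eta'_apply by (auto simp: be_apply)
    moreover have "k \<noteq> 1" using False m1 by auto
    ultimately show ?thesis by (simp add: Ev_apply pos_def)
  qed
qed

lemma eta'_j: "t \<noteq> 0 \<Longrightarrow> \<eta>' j = 0"
  using Ev_j[of \<eta>'] Ev_eta' etaj by simp

end



context S begin

abbreviation "Y1 \<equiv> mut_var m B0 d h X 1"
abbreviation "Yj \<equiv> mut_var m B0 d h X j"
abbreviation "Zj \<equiv> mut_var m B1 d h X' j"
abbreviation "INV \<equiv> {y. \<exists>k\<in>{2..n}. k \<noteq> j \<and> (y = X (unitv k) \<or> y = inverse (X (unitv k)))}"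
definition "S0 = ZP m n v X \<union> ({X (e 1), Y1, X (e j)} \<union> INV)"
definition "A = gen_ring S0"

definition G :: "nat \<Rightarrow> nat \<Rightarrow> int" where
  "G r = (\<lambda>k. int r * pos (\<beta> k) + (d 1 - int r) * pos (- \<beta> k) - e 1 k)"

lemma Y1_def: "Y1 = (\<Sum>r\<in>{0..nat (d 1)}. h 1 r * X (G r))"
  by (simp add: mut_var_def G_def)

lemma G_in[intro]: "vec_in m (G r)"
  unfolding vec_in_def G_def using beta_out[of _ 1] m1 by (auto simp: pos_def e_apply)

lemma G_1: "G r 1 = -1" using beta1 unfolding G_def by (simp add: pos_def e_apply)

lemma G_affine: "G r = G 0 + sm (int r) \<beta>"
  by (rule ext) (simp add: G_def pos_neg algebra_simps)

lemma h1l: "r \<in> {0..nat (d 1)} \<Longrightarrow> h 1 r \<in> laurent v" using hl i1 by blast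
lemma hjl: "r \<in> {0..nat (d j)} \<Longrightarrow> h j r \<in> laurent v" using hl ij by blast

lemma A_base: "x \<in> S0 \<Longrightarrow> x \<in> A" unfolding A_def by (rule gen_ring.base)
lemma A_add: "x \<in> A \<Longrightarrow> y \<in> A \<Longrightarrow> x + y \<in> A" unfolding A_def by (rule gen_ring.add)
lemma A_mult: "x \<in> A \<Longrightarrow> y \<in> A \<Longrightarrow> x * y \<in> A" unfolding A_def by (rule gen_ring.mult)
lemma A_neg: "x \<in> A \<Longrightarrow> - x \<in> A" unfolding A_def by (rule gen_ring.neg)
lemma A_diff: "x \<in> A \<Longrightarrow> y \<in> A \<Longrightarrow> x - y \<in> A" unfolding A_def by (rule gen_ring_diff)
lemma A_one: "1 \<in> A" unfolding A_def by (rule gen_ring.one)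
lemma A_zero: "0 \<in> A" unfolding A_def by (rule gen_ring_zero)
lemma A_power: "x \<in> A \<Longrightarrow> x ^ k \<in> A" unfolding A_def by (rule gen_ring_power)
lemma A_sum: "(\<And>x. x \<in> I \<Longrightarrow> f x \<in> A) \<Longrightarrow> sum f I \<in> A" unfolding A_def by (rule gen_ring_sum)

lemma A_ZP: "x \<in> ZP m n v X \<Longrightarrow> x \<in> A" by (rule A_base) (simp add: S0_def)
lemma A_X1: "X (e 1) \<in> A" by (rule A_base) (simp add: S0_def)
lemma A_Xj: "X (e j) \<in> A" by (rule A_base) (simp add: S0_def)
lemma A_Y1: "Y1 \<in> A" by (rule A_base) (simp add: S0_def)
lemma A_INV: assumes "k \<in> {2..n}" "k \<noteq> j" shows "X (e k) \<in> A \<and> inverse (X (e k)) \<in> A"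
proof -
  have "X (e k) \<in> S0" "inverse (X (e k)) \<in> S0" using assms unfolding S0_def by blast+
  then show ?thesis using A_base by blast
qed

lemma laurent_A: assumes "p \<in> laurent v" shows "p \<in> A"
proof (rule A_ZP)
  have "p = (\<Sum>c\<in>{0::nat\<Rightarrow>int}. (\<lambda>_. p) c * X c)" using X0 by simp
  moreover have "\<forall>c\<in>{0::nat\<Rightarrow>int}. vec_in m c \<and> (\<forall>k. 1 \<le> k \<and> k \<le> n \<longrightarrow> c k = 0) \<and> (\<lambda>_. p) c \<in> laurent v"
    using assms by auto
  ultimately show "p \<in> ZP m n v X" unfolding ZP_def mem_Collect_eq
    by (intro exI[of _ "{0::nat\<Rightarrow>int}"] exI[of _ "\<lambda>_. p"]) simp
qed

lemma vpow_A: "v powi k \<in> A" using laurent_A[OF laurent_powi] .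

lemma XZP: assumes "vec_in m c" "\<forall>k. 1 \<le> k \<and> k \<le> n \<longrightarrow> c k = 0" shows "X c \<in> A"
proof (rule A_ZP)
  have "X c = (\<Sum>c'\<in>{c}. (\<lambda>_. 1) c' * X c')" by simp
  moreover have "\<forall>c'\<in>{c}. vec_in m c' \<and> (\<forall>k. 1 \<le> k \<and> k \<le> n \<longrightarrow> c' k = 0) \<and> (\<lambda>_. 1) c' \<in> laurent v"
    using assms laurent_one by auto
  ultimately show "X c \<in> ZP m n v X" unfolding ZP_def mem_Collect_eq
    by (intro exI[of _ "{c}"] exI[of _ "\<lambda>_. 1"]) simp
qed

lemma XeA: "k \<in> {1..n} \<Longrightarrow> X (e k) \<in> A"
  using A_X1 A_Xj A_INV[of k] by (cases "k = 1"; cases "k = j") auto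

definition N :: "(nat \<Rightarrow> int) \<Rightarrow> nat" where "N c = (\<Sum>k\<in>{1..n}. nat \<bar>c k\<bar>)"

lemma N_step:
  assumes k: "k \<in> {1..n}" and c': "\<forall>i. i \<noteq> k \<longrightarrow> c' i = c i" and less: "nat \<bar>c' k\<bar> < nat \<bar>c k\<bar>"
  shows "N c' < N c"
proof -
  have f: "finite {1..n}" by simp
  have "N c' = nat \<bar>c' k\<bar> + (\<Sum>i\<in>{1..n}-{k}. nat \<bar>c' i\<bar>)" unfolding N_def by (rule sum.remove[OF f k])
  moreover have "N c = nat \<bar>c k\<bar> + (\<Sum>i\<in>{1..n}-{k}. nat \<bar>c i\<bar>)" unfolding N_def by (rule sum.remove[OF f k])
  moreover have "(\<Sum>i\<in>{1..n}-{k}. nat \<bar>c' i\<bar>) = (\<Sum>i\<in>{1..n}-{k}. nat \<bar>c i\<bar>)"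
    using c' by (intro sum.cong refl) auto
  ultimately show ?thesis using less by simp
qed

lemma XinA_aux: "\<forall>c. N c = M \<longrightarrow> vec_in m c \<longrightarrow> c 1 \<ge> 0 \<longrightarrow> c j \<ge> 0 \<longrightarrow> X c \<in> A"
proof (induct M rule: less_induct)
  case (less M)
  show ?case
  proof (intro allI impI)
    fix c assume NM: "N c = M" and c: "vec_in m c" and c1: "c 1 \<ge> 0" and cj: "c j \<ge> 0"
    show "X c \<in> A"
    proof (cases "\<forall>k. 1 \<le> k \<and> k \<le> n \<longrightarrow> c k = 0")
      case True then show ?thesis using XZP c by blast
    next
      case False
      then obtain k where k: "k \<in> {1..n}" and ck: "c k \<noteq> 0" by auto
      have km: "k \<in> {1..m}" using k nm by auto
      show ?thesis
      proof (cases "c k > 0")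
        case True
        define c' where "c' = c - e k"
        have c'in: "vec_in m c'" unfolding c'_def by (rule vec_in_diff[OF c vec_in_unitv[OF km]])
        have "N c' < N c" using k True by (intro N_step) (auto simp: c'_def e_apply)
        moreover have "c' 1 \<ge> 0" "c' j \<ge> 0" using c1 cj True by (auto simp: c'_def e_apply)
        ultimately have XA: "X c' \<in> A" using less NM c'in by blast
        have cc: "c' + e k = c" by (rule ext) (simp add: c'_def)
        have "X c' * X (e k) = v powi bl c' (e k) * X c" using Xmul[OF c'in vec_in_unitv[OF km]] cc by simp
        then have "X c = v powi (- bl c' (e k)) * (X c' * X (e k))"
          by (simp add: mult.assoc[symmetric] vpow_add)
        then show ?thesis using XA XeA[OF k] vpow_A A_mult by metis
      next
        case False
        then have neg: "c k < 0" using ck by simp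
        then have k1: "k \<noteq> 1" "k \<noteq> j" using c1 cj by auto
        then have k2: "k \<in> {2..n}" using k by auto
        define c' where "c' = c + e k"
        have c'in: "vec_in m c'" unfolding c'_def by (rule vec_in_add[OF c vec_in_unitv[OF km]])
        have "N c' < N c" using k neg by (intro N_step) (auto simp: c'_def e_apply)
        moreover have "c' 1 \<ge> 0" "c' j \<ge> 0" using c1 cj k1 by (auto simp: c'_def e_apply)
        ultimately have XA: "X c' \<in> A" using less NM c'in by blast
        have cc: "c' + - e k = c" by (rule ext) (simp add: c'_def)
        have mk: "vec_in m (- e k)" by (rule vec_in_uminus[OF vec_in_unitv[OF km]])
        have "X c' * X (- e k) = v powi bl c' (- e k) * X c" using Xmul[OF c'in mk] cc by simp
        then have "X c = v powi (- bl c' (- e k)) * (X c' * X (- e k))"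
          by (simp add: mult.assoc[symmetric] vpow_add)
        moreover have "X (- e k) \<in> A" using A_INV[OF k2 k1(2)] Xinverse[OF vec_in_unitv[OF km]] by simp
        ultimately show ?thesis using XA vpow_A A_mult by metis
      qed
    qed
  qed
qed

lemma XinA: "vec_in m c \<Longrightarrow> c 1 \<ge> 0 \<Longrightarrow> c j \<ge> 0 \<Longrightarrow> X c \<in> A"
  using XinA_aux by blast

lemma ZP_comm: assumes "x \<in> ZP m n v X" shows "v * x = x * v"
proof -
  obtain C p where x: "x = (\<Sum>c\<in>C. p c * X c)" and C: "\<forall>c\<in>C. vec_in m c \<and> p c \<in> laurent v"
    using assms unfolding ZP_def by blast
  have "v * x = (\<Sum>c\<in>C. v * (p c * X c))" unfolding x by (simp add: sum_distrib_left)
  also have "\<dots> = (\<Sum>c\<in>C. p c * X c * v)"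
  proof (intro sum.cong refl)
    fix c assume c: "c \<in> C"
    have "v * p c = p c * v" using laurent_commute[of "p c" v v] C c by simp
    then have "v * (p c * X c) = p c * (v * X c)" by (simp add: mult.assoc[symmetric])
    also have "\<dots> = p c * X c * v" using vX C c by (simp add: mult.assoc)
    finally show "v * (p c * X c) = p c * X c * v" .
  qed
  also have "\<dots> = x * v" unfolding x by (simp add: sum_distrib_right)
  finally show ?thesis .
qed

lemma Y1_comm: "v * Y1 = Y1 * v"
proof -
  have "v * Y1 = (\<Sum>r\<in>{0..nat (d 1)}. v * (h 1 r * X (G r)))" unfolding Y1_def by (simp add: sum_distrib_left)
  also have "\<dots> = (\<Sum>r\<in>{0..nat (d 1)}. h 1 r * X (G r) * v)"
  proof (intro sum.cong refl)
    fix r assume r: "r \<in> {0..nat (d 1)}"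
    have "v * h 1 r = h 1 r * v" using laurent_commute[OF h1l[OF r], of v] by simp
    then show "v * (h 1 r * X (G r)) = h 1 r * X (G r) * v"
      using vX[OF G_in[of r]] by (metis mult.assoc)
  qed
  also have "\<dots> = Y1 * v" unfolding Y1_def by (simp add: sum_distrib_right)
  finally show ?thesis .
qed

lemma comm_v: "x \<in> A \<Longrightarrow> v * x = x * v"
  unfolding A_def
proof (induct rule: gen_ring.induct)
  case (base x)
  then show ?case unfolding S0_def
  proof (elim UnE)
    assume "x \<in> ZP m n v X" then show ?thesis by (rule ZP_comm)
  next
    assume "x \<in> {X (e 1), Y1, X (e j)}"
    then show ?thesis using vX[OF e1_in] vX[OF ej_in] Y1_comm by auto
  next
    assume "x \<in> INV"
    then obtain k where k: "k \<in> {2..n}" "x = X (e k) \<or> x = inverse (X (e k))" by blast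
    have "vec_in m (e k)" using k nm by auto
    then show ?thesis using k vX inverse_commute2 by metis
  qed
next
  case one then show ?case by simp
next
  case (add x y) then show ?case by (simp add: algebra_simps)
next
  case (neg x) then show ?case by simp
next
  case (mult x y) then show ?case by (metis mult.assoc)
qed

lemma comm_vpow: "x \<in> A \<Longrightarrow> v powi k * x = x * v powi k"
  by (rule powi_commute[OF comm_v])

lemma comm_laurent: "p \<in> laurent v \<Longrightarrow> x \<in> A \<Longrightarrow> p * x = x * p"
  by (rule laurent_commute[OF _ comm_v])

end



context S begin

lemma X'mul: "vec_in m c \<Longrightarrow> vec_in m c' \<Longrightarrow> X' c * X' c' = v powi (bl1 c c') * X' (c + c')"
proof -
  assume a: "vec_in m c" "vec_in m c'"
  have "X' c * X' c' = v powi (bl1 c c') * X' (\<lambda>k. c k + c' k)" using rel' a unfolding qtorus_rel_def by blast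
  then show ?thesis by (simp add: plus_fun_def)
qed

lemma two_in: "2 \<in> {1..m}" using n2 nm by auto

lemma X'e: "k \<in> {1..m} \<Longrightarrow> k \<noteq> 1 \<Longrightarrow> X' (e k) = X (e k)" using X'k by blast

lemma X'0: "X' 0 = 1"
proof -
  have e2: "vec_in m (e 2)" using two_in by auto
  have nz: "X' (e 2) \<noteq> 0" using X'e[OF two_in] Xnz[OF e2] by simp
  have "X' (e 2) * X' 0 = X' (e 2) * 1" using X'mul[OF e2 vec_in_zero] by simp
  then show ?thesis using nz by simp
qed

lemma cancel_left: "(a::'f) \<noteq> 0 \<Longrightarrow> a * x = a * y \<Longrightarrow> x = y" by simp
lemma cancel_right: "(a::'f) \<noteq> 0 \<Longrightarrow> x * a = y * a \<Longrightarrow> x = y" by simp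

lemma vpow_nz: "v powi k \<noteq> 0" using vne by (simp add: power_int_not_zero)

definition NM :: "(nat \<Rightarrow> int) \<Rightarrow> nat" where "NM c = (\<Sum>k\<in>{1..m}. nat \<bar>c k\<bar>)"

lemma NM_step:
  assumes k: "k \<in> {1..m}" and c': "\<forall>i. i \<noteq> k \<longrightarrow> c' i = c i" and less: "nat \<bar>c' k\<bar> < nat \<bar>c k\<bar>"
  shows "NM c' < NM c"
proof -
  have f: "finite {1..m}" by simp
  have "NM c' = nat \<bar>c' k\<bar> + (\<Sum>i\<in>{1..m}-{k}. nat \<bar>c' i\<bar>)" unfolding NM_def by (rule sum.remove[OF f k])
  moreover have "NM c = nat \<bar>c k\<bar> + (\<Sum>i\<in>{1..m}-{k}. nat \<bar>c i\<bar>)" unfolding NM_def by (rule sum.remove[OF f k])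
  moreover have "(\<Sum>i\<in>{1..m}-{k}. nat \<bar>c' i\<bar>) = (\<Sum>i\<in>{1..m}-{k}. nat \<bar>c i\<bar>)"
    using c' by (intro sum.cong refl) auto
  ultimately show ?thesis using less by simp
qed

lemma X'eq_aux: "\<forall>c. NM c = M \<longrightarrow> vec_in m c \<longrightarrow> c 1 = 0 \<longrightarrow> X' c = X c"
proof (induct M rule: less_induct)
  case (less M)
  show ?case
  proof (intro allI impI)
    fix c assume NMc: "NM c = M" and c: "vec_in m c" and c1: "c 1 = 0"
    show "X' c = X c"
    proof (cases "\<forall>k\<in>{1..m}. c k = 0")
      case True
      have "c = 0"
      proof (rule ext)
        fix x show "c x = 0 x" using True c unfolding vec_in_def by (cases "x = 0 \<or> m < x") auto
      qed
      then show ?thesis using X0 X'0 by simp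
    next
      case False
      then obtain k where km: "k \<in> {1..m}" and ck: "c k \<noteq> 0" by auto
      have k1: "k \<noteq> 1" using c1 ck by auto
      have ek: "vec_in m (e k)" using km by auto
      have ek1: "e k 1 = 0" using k1 by (simp add: e_apply)
      show ?thesis
      proof (cases "c k > 0")
        case True
        define c' where "c' = c - e k"
        have c'in: "vec_in m c'" unfolding c'_def by (rule vec_in_diff[OF c ek])
        have "NM c' < NM c" using km True by (intro NM_step) (auto simp: c'_def e_apply)
        moreover have c'1: "c' 1 = 0" using c1 k1 by (simp add: c'_def e_apply)
        ultimately have IH: "X' c' = X c'" using less NMc c'in by blast
        have cc: "c' + e k = c" by (rule ext) (simp add: c'_def)
        have "v powi bl c' (e k) * X' c = X' c' * X' (e k)"
          using X'mul[OF c'in ek] cc bl1_fix[of c' "e k", OF c'1 ek1] by simp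
        also have "\<dots> = X c' * X (e k)" using IH X'e[OF km k1] by simp
        also have "\<dots> = v powi bl c' (e k) * X c" using Xmul[OF c'in ek] cc by simp
        finally show ?thesis using vne by simp
      next
        case False
        define c' where "c' = c + e k"
        have c'in: "vec_in m c'" unfolding c'_def by (rule vec_in_add[OF c ek])
        have "NM c' < NM c" using km False ck by (intro NM_step) (auto simp: c'_def e_apply)
        moreover have c'1: "c' 1 = 0" using c1 k1 by (simp add: c'_def e_apply)
        ultimately have IH: "X' c' = X c'" using less NMc c'in by blast
        have "X' c * X (e k) = X' c * X' (e k)" using X'e[OF km k1] by simp
        also have "\<dots> = v powi bl c (e k) * X' c'"
          using X'mul[OF c ek] bl1_fix[of c "e k", OF c1 ek1] by (simp add: c'_def)
        also have "\<dots> = X c * X (e k)" using IH Xmul[OF c ek] by (simp add: c'_def)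
        finally show ?thesis using Xnz[OF ek] by simp
      qed
    qed
  qed
qed

lemma X'eq: "vec_in m c \<Longrightarrow> c 1 = 0 \<Longrightarrow> X' c = X c"
  using X'eq_aux by blast

lemma X'e1: "X' (e 1) = Y1" using X'1 .

lemma X'inA_aux: "\<forall>c. nat (c 1) = s \<longrightarrow> vec_in m c \<longrightarrow> c 1 \<ge> 0 \<longrightarrow> c j \<ge> 0 \<longrightarrow> X' c \<in> A"
proof (induct s)
  case 0
  then show ?case using X'eq XinA by (metis nat_0_iff order.antisym)
next
  case (Suc s)
  show ?case
  proof (intro allI impI)
    fix c assume s: "nat (c 1) = Suc s" and c: "vec_in m c" and c1: "c 1 \<ge> 0" and cj: "c j \<ge> 0"
    define y where "y = c - e 1"
    have yin: "vec_in m y" unfolding y_def by (rule vec_in_diff[OF c e1_in])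
    have y1: "nat (y 1) = s" "y 1 \<ge> 0" using s by (auto simp: y_def e_apply)
    have yj: "y j \<ge> 0" using cj j1 by (simp add: y_def e_apply)
    have XA: "X' y \<in> A" using Suc y1 yin yj by blast
    have cc: "e 1 + y = c" by (rule ext) (simp add: y_def)
    have "Y1 * X' y = v powi bl1 (e 1) y * X' c" using X'mul[OF e1_in yin] cc X'e1 by simp
    then have "X' c = v powi (- bl1 (e 1) y) * (Y1 * X' y)"
      by (simp add: mult.assoc[symmetric] vpow_add)
    then show "X' c \<in> A" using XA A_Y1 vpow_A A_mult by metis
  qed
qed

lemma X'inA: "vec_in m c \<Longrightarrow> c 1 \<ge> 0 \<Longrightarrow> c j \<ge> 0 \<Longrightarrow> X' c \<in> A"
  using X'inA_aux by blast

definition "J = (\<lambda>y. X (e j) * y) ` A"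

lemma J_A: "x \<in> J \<Longrightarrow> x \<in> A" unfolding J_def using A_Xj A_mult by blast
lemma J_add: "x \<in> J \<Longrightarrow> y \<in> J \<Longrightarrow> x + y \<in> J"
  unfolding J_def by (auto simp: distrib_left[symmetric] intro!: imageI A_add)
lemma J_diff: "x \<in> J \<Longrightarrow> y \<in> J \<Longrightarrow> x - y \<in> J"
  unfolding J_def by (auto simp: right_diff_distrib[symmetric] intro!: imageI A_diff)
lemma J_zero: "0 \<in> J" unfolding J_def using A_zero by force
lemma J_right: "x \<in> J \<Longrightarrow> a \<in> A \<Longrightarrow> x * a \<in> J"
  unfolding J_def by (auto simp: mult.assoc intro!: imageI A_mult)
lemma J_left: assumes g: "g \<in> A" and gc: "g * X (e j) = v powi k * (X (e j) * g)" and x: "x \<in> J"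
  shows "g * x \<in> J"
proof -
  obtain y where y: "y \<in> A" "x = X (e j) * y" using x unfolding J_def by blast
  have "g * x = (g * X (e j)) * y" using y by (simp add: mult.assoc)
  also have "\<dots> = v powi k * (X (e j) * g) * y" using gc by simp
  also have "\<dots> = X (e j) * (v powi k * g * y)" by (simp add: mult.assoc[symmetric] vpX[OF ej_in])
  finally show ?thesis unfolding J_def using y g vpow_A A_mult by blast
qed
lemma J_cancel: "X (e j) * y \<in> J \<Longrightarrow> y \<in> A"
  unfolding J_def using Xnz[OF ej_in] by auto
lemma J_sum: "(\<And>x. x \<in> I \<Longrightarrow> f x \<in> J) \<Longrightarrow> sum f I \<in> J"
  by (induct I rule: infinite_finite_induct) (auto intro: J_add J_zero)
lemma J_mono: assumes c: "vec_in m c" "c 1 \<ge> 0" "c j \<ge> 1" shows "X c \<in> J"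
proof -
  define c' where "c' = c - e j"
  have c'in: "vec_in m c'" unfolding c'_def by (rule vec_in_diff[OF c(1) ej_in])
  have c'A: "X c' \<in> A" using c j1 by (intro XinA[OF c'in]) (auto simp: c'_def e_apply)
  have "X (e j) * X c' = v powi bl (e j) c' * X c" using Xmul[OF ej_in c'in] by (simp add: c'_def)
  then have "X c = v powi (- bl (e j) c') * (X (e j) * X c')" by (simp add: mult.assoc[symmetric] vpow_add)
  also have "\<dots> = X (e j) * (v powi (- bl (e j) c') * X c')" by (simp add: mult.assoc[symmetric] vpX[OF ej_in])
  finally show ?thesis unfolding J_def using c'A vpow_A A_mult by blast
qed
lemma J_left_mono: "vec_in m c \<Longrightarrow> X c \<in> A \<Longrightarrow> x \<in> J \<Longrightarrow> X c * x \<in> J"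
  by (rule J_left[where k = "2 * bl c (e j)"]) (simp_all add: Xswap[OF _ ej_in])
lemma J_left_laurent: "p \<in> laurent v \<Longrightarrow> x \<in> J \<Longrightarrow> p * x \<in> J"
  by (rule J_left[where k = 0]) (simp_all add: laurent_A comm_laurent[OF _ A_Xj])
lemma J_left_vpow: "x \<in> J \<Longrightarrow> v powi k * x \<in> J"
  by (rule J_left_laurent[OF laurent_powi])

end



declare One_nat_def[simp del]

context S begin

abbreviation "E0 \<equiv> Ev eps0"
definition "r0 = (if t > 0 then nat (d 1) else 0)"
definition "P = E0 (e 1)"
definition "\<Gamma> = e 1 + P"

lemma r0_in: "r0 \<in> {0..nat (d 1)}" by (simp add: r0_def)
lemma h_r0: "h 1 r0 = 1" using h01 i1 by (simp add: r0_def)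

lemma P_in[intro]: "vec_in m P" unfolding P_def by auto
lemma Gamma_in[intro]: "vec_in m \<Gamma>" unfolding \<Gamma>_def by auto
lemma P_1: "P 1 = -1" by (simp add: P_def Ev_apply e_apply)
lemma Gamma_1: "\<Gamma> 1 = 0" by (simp add: \<Gamma>_def P_1 e_apply)
lemma P_j: "t \<noteq> 0 \<Longrightarrow> P j = 0" unfolding P_def using Ev_j[of "e 1"] j1 by (simp add: e_apply)
lemma Gamma_j: "t \<noteq> 0 \<Longrightarrow> \<Gamma> j = 0" unfolding \<Gamma>_def using P_j j1 by (simp add: e_apply)

lemma G_r0: "G r0 = P"
proof (rule ext)
  fix k
  have dpos: "int (nat (d 1)) = d 1" using d1_pos by simp
  show "G r0 k = P k"
  proof (cases "k = 1")
    case True then show ?thesis using G_1 P_1 by simp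
  next
    case False
    then show ?thesis using dpos by (simp add: G_def P_def Ev_apply r0_def eps0_def e_apply)
  qed
qed

lemma G_j0: "r \<in> {0..nat (d 1)} \<Longrightarrow> G r j \<ge> 0"
  using j1 d1_pos by (simp add: G_def pos_def e_apply)

lemma one_le_mult: "(1::int) \<le> a \<Longrightarrow> 1 \<le> b \<Longrightarrow> 1 \<le> a * b"
  using mult_mono[of 1 a 1 b] by simp

lemma G_j1: assumes t: "t \<noteq> 0" and r: "r \<in> {0..nat (d 1)}" and rr: "r \<noteq> r0" shows "G r j \<ge> 1"
proof (cases "t > 0")
  case True
  then have b: "\<beta> j < 0" by (rule tpos)
  have "int r < d 1" using r rr True by (auto simp: r0_def)
  then have "G r j = (d 1 - int r) * (- \<beta> j)" using b j1 by (simp add: G_def pos_def e_apply)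
  moreover have "1 \<le> (d 1 - int r) * (- \<beta> j)" using \<open>int r < d 1\<close> b by (intro one_le_mult) auto
  ultimately show ?thesis by simp
next
  case False
  then have b: "\<beta> j > 0" using t tneg by simp
  have "r \<ge> 1" using rr False by (simp add: r0_def)
  then have "G r j = int r * \<beta> j" using b j1 by (simp add: G_def pos_def e_apply)
  moreover have "1 \<le> int r * \<beta> j" using \<open>r \<ge> 1\<close> b by (intro one_le_mult) auto
  ultimately show ?thesis by simp
qed

lemma h1_comm: "r \<in> {0..nat (d 1)} \<Longrightarrow> x \<in> A \<Longrightarrow> h 1 r * x = x * h 1 r"
  by (rule comm_laurent[OF h1l])

lemma Y1_split: "Y1 = X P + (\<Sum>r\<in>{0..nat (d 1)}-{r0}. h 1 r * X (G r))"
  unfolding Y1_def using sum.remove[of "{0..nat (d 1)}" r0 "\<lambda>r. h 1 r * X (G r)"] r0_in h_r0 G_r0 by simp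

lemma X1Y1: assumes t: "t \<noteq> 0" shows "X (e 1) * Y1 - X (e 1) * X P \<in> J"
proof -
  have "X (e 1) * Y1 - X (e 1) * X P = (\<Sum>r\<in>{0..nat (d 1)}-{r0}. h 1 r * (X (e 1) * X (G r)))"
    unfolding Y1_split using h1_comm[OF _ A_X1]
    by (simp add: distrib_left sum_distrib_left mult.assoc[symmetric])
  also have "\<dots> \<in> J"
  proof (rule J_sum)
    fix r assume r: "r \<in> {0..nat (d 1)}-{r0}"
    have "X (e 1) * X (G r) = v powi bl (e 1) (G r) * X (e 1 + G r)" by (rule Xmul) auto
    moreover have "X (e 1 + G r) \<in> J"
      using G_1[of r] G_j1[OF t, of r] r j1 by (intro J_mono) (auto simp: e_apply)
    ultimately show "h 1 r * (X (e 1) * X (G r)) \<in> J"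
      using r h1l by (auto intro!: J_left_laurent J_left_vpow)
  qed
  finally show ?thesis .
qed

lemma Y1X1: assumes t: "t \<noteq> 0" shows "Y1 * X (e 1) - X P * X (e 1) \<in> J"
proof -
  have "Y1 * X (e 1) - X P * X (e 1) = (\<Sum>r\<in>{0..nat (d 1)}-{r0}. h 1 r * (X (G r) * X (e 1)))"
    unfolding Y1_split by (simp add: distrib_right sum_distrib_right mult.assoc)
  also have "\<dots> \<in> J"
  proof (rule J_sum)
    fix r assume r: "r \<in> {0..nat (d 1)}-{r0}"
    have "X (G r) * X (e 1) = v powi bl (G r) (e 1) * X (G r + e 1)" by (rule Xmul) auto
    moreover have "X (G r + e 1) \<in> J"
      using G_1[of r] G_j1[OF t, of r] r j1 by (intro J_mono) (auto simp: e_apply)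
    ultimately show "h 1 r * (X (G r) * X (e 1)) \<in> J"
      using r h1l by (auto intro!: J_left_laurent J_left_vpow)
  qed
  finally show ?thesis .
qed

lemma Y1_comm_mono: assumes c: "vec_in m c" "c 1 = 0"
  shows "Y1 * X c = v powi (2 * bl (G 0) c) * (X c * Y1)"
proof -
  have XcA: "X c \<in> A" if "c j \<ge> 0" using XinA c that by simp
  have key: "X (G r) * X c = v powi (2 * bl (G 0) c) * (X c * X (G r))" for r
  proof -
    have "bl (G r) c = bl (G 0) c"
      using G_affine[of r] bl_be_rev[OF i1, of c] c(2) by (simp add: bil_add1 bil_sm1)
    then show ?thesis using Xswap[OF G_in c(1)] by simp
  qed
  have "Y1 * X c = (\<Sum>r\<in>{0..nat (d 1)}. h 1 r * (X (G r) * X c))"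
    unfolding Y1_def by (simp add: sum_distrib_right mult.assoc)
  also have "\<dots> = (\<Sum>r\<in>{0..nat (d 1)}. v powi (2 * bl (G 0) c) * (X c * (h 1 r * X (G r))))"
  proof (intro sum.cong refl)
    fix r assume r: "r \<in> {0..nat (d 1)}"
    have hc: "h 1 r * X c = X c * h 1 r"
      by (rule laurent_commute[OF h1l[OF r] vX[OF c(1)]])
    have hv: "h 1 r * v powi (2 * bl (G 0) c) = v powi (2 * bl (G 0) c) * h 1 r"
      by (rule laurent_commute[OF h1l[OF r]]) (rule powi_commute[of v v, symmetric], simp)
    show "h 1 r * (X (G r) * X c) = v powi (2 * bl (G 0) c) * (X c * (h 1 r * X (G r)))"
    proof -
      have "h 1 r * (X (G r) * X c) = (h 1 r * v powi (2 * bl (G 0) c)) * X c * X (G r)"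
        unfolding key by (simp add: mult.assoc)
      also have "\<dots> = v powi (2 * bl (G 0) c) * (h 1 r * X c) * X (G r)" unfolding hv by (simp add: mult.assoc)
      also have "\<dots> = v powi (2 * bl (G 0) c) * (X c * (h 1 r * X (G r)))" unfolding hc by (simp add: mult.assoc)
      finally show ?thesis .
    qed
  qed
  also have "\<dots> = v powi (2 * bl (G 0) c) * (X c * Y1)"
    unfolding Y1_def by (simp add: sum_distrib_left)
  finally show ?thesis .
qed

lemma J_left_Y1: "x \<in> J \<Longrightarrow> Y1 * x \<in> J"
  by (rule J_left[OF A_Y1 Y1_comm_mono[OF ej_in]]) (simp_all add: e_apply j1)

lemma J_left_Y1pow: "x \<in> J \<Longrightarrow> Y1 ^ k * x \<in> J"
  by (induct k) (simp_all add: mult.assoc J_left_Y1)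

end



declare One_nat_def[simp del]

context S begin

lemma X1pow: "X (e 1) ^ k = X (sm (int k) (e 1))" using Xpow[OF e1_in] .

lemma X1pow_A: "X (e 1) ^ k \<in> A" using A_power[OF A_X1] .

lemma exp_id:
  fixes k' :: nat and P Q :: "nat \<Rightarrow> int"
  shows "- bl P Q + (bl (sm (int (Suc k')) (e 1)) P - bl (e 1 + P) (sm (int k') (e 1)))
     + int k' * bl (e 1) Q + bl (e 1 + P) (sm (int k') (e 1) + Q)
     = int (Suc k') * bl (e 1) (P + Q)"
  by (simp add: bil_lin algebra_simps)

lemma MainL: assumes t: "t \<noteq> 0" shows
  "\<forall>c k. vec_in m c \<longrightarrow> c 1 = int s \<longrightarrow> c j \<ge> 0 \<longrightarrow> s \<le> k \<longrightarrow>
     X (e 1) ^ k * X' c - v powi (int k * bl (e 1) (E0 c)) * X (sm (int k) (e 1) + E0 c) \<in> J"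
proof (induct s)
  case 0
  show ?case
  proof (intro allI impI)
    fix c and k :: nat assume c: "vec_in m c" and c1: "c 1 = int 0" and cj: "c j \<ge> 0" and k: "0 \<le> k"
    have c1': "c 1 = 0" using c1 by simp
    have "X (e 1) ^ k * X' c = X (sm (int k) (e 1)) * X c" using X1pow X'eq[OF c c1'] by simp
    also have "\<dots> = v powi (int k * bl (e 1) c) * X (sm (int k) (e 1) + c)"
      using Xmul[OF vec_in_sm[OF e1_in] c] by (simp add: bil_sm1)
    finally show "X (e 1) ^ k * X' c - v powi (int k * bl (e 1) (E0 c)) * X (sm (int k) (e 1) + E0 c) \<in> J"
      using Ev_fix[of c, OF c1'] J_zero by simp
  qed
next
  case (Suc s)
  show ?case
  proof (intro allI impI)
    fix c and k :: nat assume c: "vec_in m c" and c1: "c 1 = int (Suc s)" and cj: "c j \<ge> 0" and sk: "Suc s \<le> k"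
    obtain k' where kk: "k = Suc k'" and sk': "s \<le> k'" using sk by (cases k) auto
    define y where "y = c - e 1"
    have yin: "vec_in m y" unfolding y_def by (rule vec_in_diff[OF c e1_in])
    have y1: "y 1 = int s" using c1 by (simp add: y_def e_apply)
    have yj: "y j \<ge> 0" using cj j1 by (simp add: y_def e_apply)
    have cy: "c = e 1 + y" by (rule ext) (simp add: y_def)
    define Q where "Q = E0 y"
    define W' where "W' = sm (int k') (e 1) + Q"
    define W where "W = sm (int k) (e 1) + E0 c"
    define a where "a = bl1 (e 1) y"
    define b1 where "b1 = bl (sm (int k) (e 1)) P - bl \<Gamma> (sm (int k') (e 1))"
    define c1' where "c1' = int k' * bl (e 1) Q"
    define D where "D = X (e 1) * Y1 - X (e 1) * X P"
    define Dy where "Dy = X (e 1) ^ k' * X' y - v powi c1' * X W'"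
    have Qin: "vec_in m Q" unfolding Q_def using yin by auto
    have W'in: "vec_in m W'" unfolding W'_def using Qin by auto
    have EC: "E0 c = P + Q" unfolding cy Q_def P_def by (rule Ev_add)
    have GW: "\<Gamma> + W' = W" by (rule ext) (simp add: \<Gamma>_def W'_def W_def EC kk algebra_simps)
    have DJ: "D \<in> J" unfolding D_def by (rule X1Y1[OF t])
    have DyJ: "Dy \<in> J" unfolding Dy_def c1'_def W'_def Q_def using Suc yin y1 yj sk' by blast
    have X'yA: "X' y \<in> A" using X'inA[OF yin] y1 yj by simp
    have XGA: "X \<Gamma> \<in> A" using XinA[OF Gamma_in] Gamma_1 Gamma_j[OF t] by simp
    have Xk'A: "X (sm (int k') (e 1)) \<in> A" using X1pow_A X1pow by metis
    have e_c: "X' c = v powi (- a) * (Y1 * X' y)"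
    proof -
      have "Y1 * X' y = v powi a * X' c" using X'mul[OF e1_in yin] X'e1 cy by (simp add: a_def)
      then show ?thesis by (simp add: mult.assoc[symmetric] vpow_add)
    qed
    have S1: "X (e 1) ^ k * X' c = v powi (- a) * (X (e 1) ^ k' * (X (e 1) * Y1) * X' y)"
    proof -
      have "X (e 1) ^ k * X' c = (X (e 1) ^ k * v powi (- a)) * (Y1 * X' y)"
        unfolding e_c by (simp add: mult.assoc)
      also have "\<dots> = v powi (- a) * (X (e 1) ^ k * (Y1 * X' y))"
        using comm_vpow[OF X1pow_A, of "- a" k] by (metis mult.assoc)
      finally show ?thesis unfolding kk by (simp add: mult.assoc[symmetric] power_commutes)
    qed
    have S3: "X (e 1) ^ k' * (X (e 1) * X P) = v powi b1 * (X \<Gamma> * X (e 1) ^ k')"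
    proof -
      have "X (e 1) ^ k' * (X (e 1) * X P) = X (sm (int k) (e 1)) * X P"
        using X1pow[of k] unfolding kk by (simp add: mult.assoc[symmetric] power_commutes)
      also have "\<dots> = v powi (bl (sm (int k) (e 1)) P) * X (sm (int k) (e 1) + P)"
        by (rule Xmul) auto
      also have "sm (int k) (e 1) + P = \<Gamma> + sm (int k') (e 1)"
        by (rule ext) (simp add: \<Gamma>_def kk algebra_simps)
      also have "X (\<Gamma> + sm (int k') (e 1)) = v powi (- bl \<Gamma> (sm (int k') (e 1))) * (X \<Gamma> * X (sm (int k') (e 1)))"
        using Xmul[OF Gamma_in vec_in_sm[OF e1_in]] by (simp add: mult.assoc[symmetric] vpow_add)
      finally have "X (e 1) ^ k' * (X (e 1) * X P) = v powi (bl (sm (int k) (e 1)) P) *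
          (v powi (- bl \<Gamma> (sm (int k') (e 1))) * (X \<Gamma> * X (sm (int k') (e 1))))" .
      then show ?thesis unfolding b1_def X1pow by (simp only: mult.assoc[symmetric] vpow_add diff_conv_add_uminus)
    qed
    have S5: "X \<Gamma> * X W' = v powi (bl \<Gamma> W') * X W"
      using Xmul[OF Gamma_in W'in] GW by simp
    have S4: "X (e 1) ^ k' * X' y = Dy + v powi c1' * X W'" unfolding Dy_def by simp
    have main: "X (e 1) ^ k * X' c = v powi (- a) * (X (e 1) ^ k' * D * X' y)
        + v powi (- a + b1) * (X \<Gamma> * Dy) + v powi (- a + b1 + c1' + bl \<Gamma> W') * X W"
    proof -
      have "X (e 1) ^ k * X' c = v powi (- a) * (X (e 1) ^ k' * D * X' y)
          + v powi (- a) * ((X (e 1) ^ k' * (X (e 1) * X P)) * X' y)"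
        unfolding S1 D_def by (simp add: algebra_simps)
      also have "(X (e 1) ^ k' * (X (e 1) * X P)) * X' y = v powi b1 * (X \<Gamma> * (X (e 1) ^ k' * X' y))"
        unfolding S3 by (simp add: mult.assoc)
      also have "X (e 1) ^ k' * X' y = Dy + v powi c1' * X W'" by (rule S4)
      also have "X \<Gamma> * (Dy + v powi c1' * X W') = X \<Gamma> * Dy + v powi c1' * (X \<Gamma> * X W')"
        using vpX[OF Gamma_in, of c1'] by (simp add: distrib_left mult.assoc[symmetric])
      also have "X \<Gamma> * X W' = v powi (bl \<Gamma> W') * X W" by (rule S5)
      finally have fin: "X (e 1) ^ k * X' c = v powi - a * (X (e 1) ^ k' * D * X' y) +
          v powi - a * (v powi b1 * (X \<Gamma> * Dy + v powi c1' * (v powi bl \<Gamma> W' * X W)))" .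
      have r1: "v powi - a * v powi b1 = v powi (- a + b1)" by (rule vpow_add)
      have r2: "v powi (- a + b1) * v powi c1' = v powi (- a + b1 + c1')" by (rule vpow_add)
      have r3: "v powi (- a + b1 + c1') * v powi bl \<Gamma> W' = v powi (- a + b1 + c1' + bl \<Gamma> W')" by (rule vpow_add)
      show ?thesis unfolding fin by (simp only: distrib_left mult.assoc[symmetric] r1 r2 r3) (rule add.assoc[symmetric])
    qed
    have expo: "- a + b1 + c1' + bl \<Gamma> W' = int k * bl (e 1) (E0 c)"
    proof -
      have "a = bl P Q" unfolding a_def P_def Q_def by (rule bl1_E0)
      then show ?thesis unfolding b1_def c1'_def W'_def \<Gamma>_def EC kk
        using exp_id[of P Q k'] by simp
    qed
    have "X (e 1) ^ k * X' c - v powi (int k * bl (e 1) (E0 c)) * X W =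
        v powi (- a) * (X (e 1) ^ k' * D * X' y) + v powi (- a + b1) * (X \<Gamma> * Dy)"
      using main expo by simp
    also have "\<dots> \<in> J"
    proof (rule J_add)
      show "v powi (- a) * (X (e 1) ^ k' * D * X' y) \<in> J"
        using J_right[OF J_left_mono[OF vec_in_sm[OF e1_in] Xk'A DJ] X'yA] X1pow
        by (intro J_left_vpow) simp
      show "v powi (- a + b1) * (X \<Gamma> * Dy) \<in> J"
        by (intro J_left_vpow J_left_mono[OF Gamma_in XGA DyJ])
    qed
    finally show "X (e 1) ^ k * X' c - v powi (int k * bl (e 1) (E0 c)) * X (sm (int k) (e 1) + E0 c) \<in> J"
      unfolding W_def .
  qed
qed

lemma MainL': "t \<noteq> 0 \<Longrightarrow> vec_in m c \<Longrightarrow> c 1 \<ge> 0 \<Longrightarrow> c j \<ge> 0 \<Longrightarrow> nat (c 1) \<le> k \<Longrightarrow>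
     X (e 1) ^ k * X' c - v powi (int k * bl (e 1) (E0 c)) * X (sm (int k) (e 1) + E0 c) \<in> J"
  using MainL[of "nat (c 1)"] by simp

end



declare One_nat_def[simp del]

context S begin

definition "QC = {a. a \<in> A \<and> (\<exists>k. a * X (e j) = v powi k * (X (e j) * a))}"

lemma QC_A: "a \<in> QC \<Longrightarrow> a \<in> A" by (simp add: QC_def)

lemma QC_mult: assumes "a \<in> QC" "b \<in> QC" shows "a * b \<in> QC"
proof -
  obtain k1 where k1: "a * X (e j) = v powi k1 * (X (e j) * a)" and aA: "a \<in> A" using assms(1) by (auto simp: QC_def)
  obtain k2 where k2: "b * X (e j) = v powi k2 * (X (e j) * b)" and bA: "b \<in> A" using assms(2) by (auto simp: QC_def)
  have "a * b * X (e j) = a * v powi k2 * X (e j) * b" using k2 by (simp add: mult.assoc)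
  also have "\<dots> = v powi k2 * (a * X (e j)) * b" using comm_vpow[OF aA, of k2] by (simp add: mult.assoc[symmetric])
  also have "\<dots> = v powi (k2 + k1) * (X (e j) * (a * b))" using k1 by (simp add: mult.assoc[symmetric] vpow_add)
  finally show ?thesis unfolding QC_def using aA bA A_mult by blast
qed

lemma QC_X: "vec_in m c \<Longrightarrow> X c \<in> A \<Longrightarrow> X c \<in> QC"
  unfolding QC_def using Xswap[OF _ ej_in] by blast

lemma QC_v: "v powi k \<in> QC"
proof -
  have "v powi k * X (e j) = v powi 0 * (X (e j) * v powi k)" using vpX[OF ej_in, of k] by simp
  then show ?thesis unfolding QC_def using vpow_A by blast
qed

lemma QC_Y1: "Y1 \<in> QC"
  unfolding QC_def using A_Y1 Y1_comm_mono[OF ej_in] j1 by (auto simp: e_apply)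

lemma QC_pow: "a \<in> QC \<Longrightarrow> a ^ k \<in> QC"
proof (induct k)
  case 0 then show ?case using QC_v[of 0] by simp
next
  case (Suc k) then show ?case using QC_mult[of a "a ^ k"] by simp
qed

lemma QC_move: assumes "a \<in> QC" shows "\<exists>k. \<forall>z. a * (X (e j) * z) = X (e j) * (v powi k * a * z)"
proof -
  obtain k where k: "a * X (e j) = v powi k * (X (e j) * a)" using assms by (auto simp: QC_def)
  have "a * (X (e j) * z) = X (e j) * (v powi k * a * z)" for z
  proof -
    have "a * (X (e j) * z) = v powi k * X (e j) * a * z" using k by (simp add: mult.assoc[symmetric])
    also have "\<dots> = X (e j) * (v powi k * a * z)" by (simp add: mult.assoc[symmetric] vpX[OF ej_in])
    finally show ?thesis .
  qed
  then show ?thesis by blast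
qed

definition "R = {0..nat (d j)}"
definition at :: "nat \<Rightarrow> nat \<Rightarrow> int" where
  "at r = (\<lambda>k. int r * pos (\<eta>' k) + (d j - int r) * pos (- \<eta>' k))"
definition ps :: "nat \<Rightarrow> nat \<Rightarrow> int" where
  "ps r = (\<lambda>k. int r * pos (\<eta> k) + (d j - int r) * pos (- \<eta> k))"

lemma Zj_def: "Zj = (\<Sum>r\<in>R. h j r * X' (at r - e j))"
  unfolding mut_var_def R_def at_def by (intro sum.cong refl) (simp add: fun_diff_def)
lemma Yj_def: "Yj = (\<Sum>r\<in>R. h j r * X (ps r - e j))"
  unfolding mut_var_def R_def ps_def by (intro sum.cong refl) (simp add: fun_diff_def)

lemma at_in[intro]: "vec_in m (at r)"
  using eta'_in unfolding at_def vec_in_def by (auto simp: pos_def)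
lemma ps_in[intro]: "vec_in m (ps r)"
  using be_in[of j] unfolding ps_def vec_in_def by (auto simp: pos_def)

lemma at_aff: "at r = at 0 + sm (int r) \<eta>'"
  by (rule ext) (simp add: at_def pos_neg algebra_simps)
lemma ps_aff: "ps r = ps 0 + sm (int r) \<eta>"
  by (rule ext) (simp add: ps_def pos_neg algebra_simps)

lemma hjc: "r \<in> R \<Longrightarrow> x \<in> A \<Longrightarrow> h j r * x = x * h j r"
  using comm_laurent[OF hjl] by (simp add: R_def)

lemma t0_case: assumes t: "t = 0" shows "Zj = Yj"
proof -
  have "at r = ps r" for r using eta'_t0[OF t] by (simp add: at_def ps_def)
  moreover have "X' (ps r - e j) = X (ps r - e j)" for r
    by (rule X'eq[OF vec_in_diff[OF ps_in ej_in]]) (use t j1 in \<open>simp add: ps_def e_apply pos_def\<close>)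
  ultimately show ?thesis unfolding Zj_def Yj_def by simp
qed

end



declare One_nat_def[simp del]

context S begin

definition "bb = nat (d j * \<bar>t\<bar>)"
definition "w = sm (int bb) (e 1) + E0 (at 0) - ps 0"
definition "\<kappa> = bl1 (e j) (at 0 - e j) + int bb * bl (e 1) (E0 (at 0)) - bl (e j) (ps 0 - e j) - bl w (ps 0)"
definition "u = v powi \<kappa> * X w"

lemma bb_int: "int bb = d j * \<bar>t\<bar>" using dj_pos by (simp add: bb_def)

lemma at_1': "at r 1 = int r * pos (- t) + (d j - int r) * pos t"
  by (simp add: at_def eta'_1)

lemma at_1_bounds: assumes r: "r \<in> R" shows "0 \<le> at r 1" "at r 1 \<le> int bb"
proof -
  have r': "0 \<le> int r" "int r \<le> d j" using r dj_pos by (auto simp: R_def)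
  show "0 \<le> at r 1" unfolding at_1' using r' by (simp add: pos_def)
  show "at r 1 \<le> int bb"
  proof (cases "t \<ge> 0")
    case True
    have "(d j - int r) * t \<le> d j * t" using r' True by (simp add: mult_right_mono)
    then show ?thesis unfolding at_1' bb_int using True by (simp add: pos_def)
  next
    case False
    have "int r * (- t) \<le> d j * (- t)" using r' False by (intro mult_right_mono) auto
    then show ?thesis unfolding at_1' bb_int using False by (simp add: pos_def)
  qed
qed

lemma at_j: "t \<noteq> 0 \<Longrightarrow> at r j = 0" by (simp add: at_def eta'_j pos_def)
lemma ps_j: "ps r j = 0" by (simp add: ps_def etaj pos_def)
lemma ps_1: "ps r 1 = int r * pos t + (d j - int r) * pos (- t)" by (simp add: ps_def)

lemma E0_at: "t \<noteq> 0 \<Longrightarrow> E0 (at r) = E0 (at 0) + sm (int r) \<eta>"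
  using at_aff[of r] Ev_eta' by (simp add: Ev_add Ev_sm)

lemma w_in[intro]: "vec_in m w" unfolding w_def by auto

lemma w_1: "w 1 = 0"
proof -
  have "w 1 = int bb - at 0 1 - ps 0 1" by (simp add: w_def Ev_apply e_apply)
  then show ?thesis unfolding bb_int at_1' ps_1 by (simp add: pos_def abs_if)
qed

lemma w_j: "t \<noteq> 0 \<Longrightarrow> w j = 0"
  using Ev_j[of "at 0"] at_j[of 0] ps_j[of 0] j1 by (simp add: w_def e_apply)

lemma w_vec: "t \<noteq> 0 \<Longrightarrow> w + ps r = sm (int bb) (e 1) + E0 (at r)"
  unfolding E0_at[of r] w_def ps_aff[of r] by (rule ext) simp

lemma w_eta: "t \<noteq> 0 \<Longrightarrow> bl w \<eta> = 0" using bl_be[OF ij, of w] w_j by simp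
lemma e1_eta: "bl (e 1) \<eta> = 0" using bl_be[OF ij, of "e 1"] j1 by (simp add: e_apply)

lemma Ej: "E0 (e j) = e j" by (rule Ev_fix) (use j1 in \<open>simp add: e_apply\<close>)

lemma L_exp: assumes t: "t \<noteq> 0" shows
  "bl1 (e j) (at r - e j) + int bb * bl (e 1) (E0 (at r)) = \<kappa> + bl (e j) (ps r - e j) + bl w (ps r)"
proof -
  have a1: "bl1 (e j) (at r - e j) = bl (e j) (E0 (at 0)) + int r * bl (e j) \<eta> - bl (e j) (e j)"
    unfolding bl1_E0 Ej Ev_diff E0_at[OF t, of r] by (simp add: bil_lin)
  have a0: "bl1 (e j) (at 0 - e j) = bl (e j) (E0 (at 0)) - bl (e j) (e j)"
    unfolding bl1_E0 Ej Ev_diff by (simp add: bil_lin)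
  have b1: "bl (e 1) (E0 (at r)) = bl (e 1) (E0 (at 0))"
    unfolding E0_at[OF t, of r] using e1_eta by (simp add: bil_lin)
  have c1: "bl (e j) (ps r - e j) = bl (e j) (ps 0) + int r * bl (e j) \<eta> - bl (e j) (e j)"
    unfolding ps_aff[of r] by (simp add: bil_lin)
  have d1: "bl w (ps r) = bl w (ps 0)" unfolding ps_aff[of r] using w_eta[OF t] by (simp add: bil_lin)
  show ?thesis unfolding a1 b1 c1 d1 \<kappa>_def a0 by (simp add: bil_lin)
qed

lemma X1b: "X (e 1) ^ bb \<in> QC" using QC_pow[OF QC_X[OF e1_in A_X1]] .

lemma XwA: "t \<noteq> 0 \<Longrightarrow> X w \<in> A" using XinA[OF w_in] w_1 w_j by simp
lemma XmwA: "t \<noteq> 0 \<Longrightarrow> X (- w) \<in> A" using XinA[OF vec_in_uminus[OF w_in]] w_1 w_j by simp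
lemma u_QC: "t \<noteq> 0 \<Longrightarrow> u \<in> QC" unfolding u_def using QC_mult[OF QC_v QC_X[OF w_in XwA]] by simp
lemma u_A: "t \<noteq> 0 \<Longrightarrow> u \<in> A" using u_QC QC_A by blast

lemma term_diff: assumes t: "t \<noteq> 0" and r: "r \<in> R" shows
  "X (e 1) ^ bb * (v powi bl1 (e j) (at r - e j) * X' (at r)) - u * (v powi bl (e j) (ps r - e j) * X (ps r)) \<in> J"
proof -
  define a where "a = bl1 (e j) (at r - e j)"
  define a' where "a' = bl (e j) (ps r - e j)"
  define tg where "tg = int bb * bl (e 1) (E0 (at r))"
  have MLr: "X (e 1) ^ bb * X' (at r) - v powi tg * X (sm (int bb) (e 1) + E0 (at r)) \<in> J"
    unfolding tg_def using at_1_bounds[OF r] at_j[OF t] by (intro MainL'[OF t at_in]) auto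
  have s1: "X (e 1) ^ bb * (v powi a * X' (at r)) = v powi a * (X (e 1) ^ bb * X' (at r))"
    using comm_vpow[OF X1pow_A, of a bb] by (simp add: mult.assoc[symmetric])
  have s2: "u * (v powi a' * X (ps r)) = v powi (a + tg) * X (sm (int bb) (e 1) + E0 (at r))"
  proof -
    have "u * (v powi a' * X (ps r)) = v powi \<kappa> * v powi a' * (X w * X (ps r))"
      unfolding u_def using vpX[OF w_in, of a'] by (metis mult.assoc)
    also have "\<dots> = v powi (\<kappa> + a' + bl w (ps r)) * X (w + ps r)"
      using Xmul[OF w_in ps_in] by (simp add: mult.assoc[symmetric] vpow_add)
    also have "\<kappa> + a' + bl w (ps r) = a + tg" using L_exp[OF t, of r] by (simp add: a_def a'_def tg_def)
    also have "w + ps r = sm (int bb) (e 1) + E0 (at r)" by (rule w_vec[OF t])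
    finally show ?thesis .
  qed
  have "X (e 1) ^ bb * (v powi a * X' (at r)) - u * (v powi a' * X (ps r)) =
      v powi a * (X (e 1) ^ bb * X' (at r) - v powi tg * X (sm (int bb) (e 1) + E0 (at r)))"
    unfolding s1 s2 by (simp add: right_diff_distrib mult.assoc[symmetric] vpow_add)
  also have "\<dots> \<in> J" using MLr by (rule J_left_vpow)
  finally show ?thesis unfolding a_def a'_def .
qed

definition "Z = X (e j) * Zj"
definition "W = X (e j) * Yj"

lemma Z_sum: "Z = (\<Sum>r\<in>R. h j r * (v powi bl1 (e j) (at r - e j) * X' (at r)))"
  unfolding Z_def Zj_def sum_distrib_left
proof (intro sum.cong refl)
  fix r assume r: "r \<in> R"
  have "X (e j) * (h j r * X' (at r - e j)) = h j r * (X' (e j) * X' (at r - e j))"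
    using hjc[OF r A_Xj] X'e[OF _ j1(1)] j1 by (simp add: mult.assoc[symmetric])
  also have "\<dots> = h j r * (v powi bl1 (e j) (at r - e j) * X' (at r))"
    using X'mul[OF ej_in vec_in_diff[OF at_in ej_in]] by simp
  finally show "X (e j) * (h j r * X' (at r - e j)) = h j r * (v powi bl1 (e j) (at r - e j) * X' (at r))" .
qed

lemma W_sum: "W = (\<Sum>r\<in>R. h j r * (v powi bl (e j) (ps r - e j) * X (ps r)))"
  unfolding W_def Yj_def sum_distrib_left
proof (intro sum.cong refl)
  fix r assume r: "r \<in> R"
  have "X (e j) * (h j r * X (ps r - e j)) = h j r * (X (e j) * X (ps r - e j))"
    using hjc[OF r A_Xj] by (simp add: mult.assoc[symmetric])
  also have "\<dots> = h j r * (v powi bl (e j) (ps r - e j) * X (ps r))"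
    using Xmul[OF ej_in vec_in_diff[OF ps_in ej_in]] by simp
  finally show "X (e j) * (h j r * X (ps r - e j)) = h j r * (v powi bl (e j) (ps r - e j) * X (ps r))" .
qed

lemma Z_A: "t \<noteq> 0 \<Longrightarrow> Z \<in> A"
  unfolding Z_sum
proof (rule A_sum)
  fix r assume t: "t \<noteq> 0" and r: "r \<in> R"
  have "X' (at r) \<in> A" using X'inA[OF at_in] at_1_bounds[OF r] at_j[OF t] by simp
  then show "h j r * (v powi bl1 (e j) (at r - e j) * X' (at r)) \<in> A"
    using r laurent_A[OF hjl] vpow_A A_mult by (simp add: R_def)
qed

lemma D1: assumes t: "t \<noteq> 0" shows "X (e 1) ^ bb * Z - u * W \<in> J"
proof -
  have "X (e 1) ^ bb * Z - u * W = (\<Sum>r\<in>R. h j r *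
     (X (e 1) ^ bb * (v powi bl1 (e j) (at r - e j) * X' (at r)) - u * (v powi bl (e j) (ps r - e j) * X (ps r))))"
    unfolding Z_sum W_sum sum_distrib_left sum_subtractf[symmetric]
  proof (intro sum.cong refl)
    fix r assume r: "r \<in> R"
    have c1: "X (e 1) ^ bb * h j r = h j r * X (e 1) ^ bb" using hjc[OF r X1pow_A] by simp
    have c2: "u * h j r = h j r * u" using hjc[OF r u_A[OF t]] by simp
    show "X (e 1) ^ bb * (h j r * (v powi bl1 (e j) (at r - e j) * X' (at r))) -
          u * (h j r * (v powi bl (e j) (ps r - e j) * X (ps r))) =
          h j r * (X (e 1) ^ bb * (v powi bl1 (e j) (at r - e j) * X' (at r)) -
          u * (v powi bl (e j) (ps r - e j) * X (ps r)))"
      by (simp add: right_diff_distrib mult.assoc[symmetric] c1 c2)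
  qed
  also have "\<dots> \<in> J"
    using term_diff[OF t] hjl by (intro J_sum J_left_laurent) (auto simp: R_def)
  finally show ?thesis .
qed

end



declare One_nat_def[simp del]

context S begin

lemma Y1pow_comm_mono: assumes c: "vec_in m c" "c 1 = 0"
  shows "\<exists>k. Y1 ^ n' * X c = v powi k * (X c * Y1 ^ n')"
proof (induct n')
  case 0 then show ?case by (intro exI[of _ 0]) simp
next
  case (Suc n')
  then obtain k where k: "Y1 ^ n' * X c = v powi k * (X c * Y1 ^ n')" by blast
  define k0 where "k0 = 2 * bl (G 0) c"
  have k0: "Y1 * X c = v powi k0 * (X c * Y1)" unfolding k0_def by (rule Y1_comm_mono[OF c])
  have "Y1 ^ Suc n' * X c = Y1 ^ n' * (Y1 * X c)" by (simp add: mult.assoc[symmetric] power_commutes)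
  also have "\<dots> = v powi k0 * (Y1 ^ n' * X c) * Y1"
    unfolding k0 using comm_vpow[OF A_power[OF A_Y1], of k0 n'] by (simp add: mult.assoc[symmetric])
  also have "\<dots> = v powi (k0 + k) * (X c * Y1 ^ Suc n')"
    unfolding k by (simp add: mult.assoc vpow_add[symmetric] power_Suc2 del: power_Suc)
  finally show ?case by blast
qed

lemma Gamma_eq: "P + e 1 = \<Gamma>" unfolding \<Gamma>_def by (simp add: add.commute)

lemma PX: assumes t: "t \<noteq> 0" shows "\<exists>\<kappa>'. Y1 ^ k * X (e 1) ^ k - v powi \<kappa>' * X (sm (int k) \<Gamma>) \<in> J"
proof (induct k)
  case 0 then show ?case using X0 J_zero by (intro exI[of _ 0]) (simp add: sm_def zero_fun_def[symmetric])
next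
  case (Suc k)
  then obtain \<kappa>0 where IH: "Y1 ^ k * X (e 1) ^ k - v powi \<kappa>0 * X (sm (int k) \<Gamma>) \<in> J" by blast
  define J0 where "J0 = Y1 ^ k * X (e 1) ^ k - v powi \<kappa>0 * X (sm (int k) \<Gamma>)"
  define DD where "DD = Y1 * X (e 1) - X P * X (e 1)"
  have DD: "DD \<in> J" unfolding DD_def by (rule Y1X1[OF t])
  define c0 where "c0 = bl P (e 1)"
  have XPX: "X P * X (e 1) = v powi c0 * X \<Gamma>" unfolding c0_def using Xmul[OF P_in e1_in] Gamma_eq by simp
  obtain e0 where e0: "Y1 ^ k * X \<Gamma> = v powi e0 * (X \<Gamma> * Y1 ^ k)"
    using Y1pow_comm_mono[OF Gamma_in Gamma_1] by blast
  have XGG: "X \<Gamma> * X (sm (int k) \<Gamma>) = X (sm (int (Suc k)) \<Gamma>)"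
  proof -
    have "X \<Gamma> * X (sm (int k) \<Gamma>) = v powi (bl \<Gamma> (sm (int k) \<Gamma>)) * X (\<Gamma> + sm (int k) \<Gamma>)"
      by (rule Xmul) auto
    moreover have "\<Gamma> + sm (int k) \<Gamma> = sm (int (Suc k)) \<Gamma>" by (rule ext) (simp add: algebra_simps)
    ultimately show ?thesis by (simp add: bil_sm2)
  qed
  have "Y1 ^ Suc k * X (e 1) ^ Suc k = Y1 ^ k * (Y1 * X (e 1)) * X (e 1) ^ k"
    by (simp add: mult.assoc[symmetric] power_commutes)
  also have "\<dots> = Y1 ^ k * DD * X (e 1) ^ k + Y1 ^ k * (v powi c0 * X \<Gamma>) * X (e 1) ^ k"
    unfolding XPX[symmetric] DD_def by (simp add: algebra_simps)
  also have "Y1 ^ k * (v powi c0 * X \<Gamma>) = v powi (c0 + e0) * (X \<Gamma> * Y1 ^ k)"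
  proof -
    have cc: "v powi c0 * Y1 ^ k = Y1 ^ k * v powi c0" using comm_vpow[OF A_power[OF A_Y1], of c0 k] .
    have "Y1 ^ k * (v powi c0 * X \<Gamma>) = (Y1 ^ k * v powi c0) * X \<Gamma>" by (simp add: mult.assoc)
    also have "\<dots> = v powi c0 * (Y1 ^ k * X \<Gamma>)" unfolding cc[symmetric] by (simp add: mult.assoc)
    also have "\<dots> = v powi (c0 + e0) * (X \<Gamma> * Y1 ^ k)" unfolding e0 by (simp add: mult.assoc[symmetric] vpow_add)
    finally show ?thesis .
  qed
  also have "v powi (c0 + e0) * (X \<Gamma> * Y1 ^ k) * X (e 1) ^ k = v powi (c0 + e0) * (X \<Gamma> * (Y1 ^ k * X (e 1) ^ k))"
    by (simp add: mult.assoc)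
  also have "Y1 ^ k * X (e 1) ^ k = J0 + v powi \<kappa>0 * X (sm (int k) \<Gamma>)" unfolding J0_def by simp
  also have "X \<Gamma> * (J0 + v powi \<kappa>0 * X (sm (int k) \<Gamma>)) = X \<Gamma> * J0 + v powi \<kappa>0 * X (sm (int (Suc k)) \<Gamma>)"
    unfolding XGG[symmetric] using vpX[OF Gamma_in, of \<kappa>0] by (simp add: distrib_left mult.assoc[symmetric])
  finally have eq: "Y1 ^ Suc k * X (e 1) ^ Suc k = Y1 ^ k * DD * X (e 1) ^ k +
      v powi (c0 + e0) * (X \<Gamma> * J0) + v powi (c0 + e0 + \<kappa>0) * X (sm (int (Suc k)) \<Gamma>)"
    by (simp add: distrib_left mult.assoc[symmetric] vpow_add add.assoc)
  have XGA: "X \<Gamma> \<in> A" using XinA[OF Gamma_in] Gamma_1 Gamma_j[OF t] by simp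
  have "Y1 ^ Suc k * X (e 1) ^ Suc k - v powi (c0 + e0 + \<kappa>0) * X (sm (int (Suc k)) \<Gamma>) =
      Y1 ^ k * DD * X (e 1) ^ k + v powi (c0 + e0) * (X \<Gamma> * J0)" unfolding eq by simp
  also have "\<dots> \<in> J"
    using J_add[OF J_right[OF J_left_Y1pow[OF DD] X1pow_A] J_left_vpow[OF J_left_mono[OF Gamma_in XGA IH[folded J0_def]]]] .
  finally show ?case by blast
qed

lemma ring_swap:
  assumes "SS \<subseteq> gen_ring (insert b SS)" "a \<in> gen_ring (insert b SS)" "b \<in> gen_ring (insert a SS)"
    "SS \<subseteq> gen_ring (insert a SS)"
  shows "gen_ring (insert a SS) = gen_ring (insert b SS)"
  using gen_ring_sub[of "insert a SS" "insert b SS"] gen_ring_sub[of "insert b SS" "insert a SS"] assms by auto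

lemma A_sub: "A \<subseteq> gen_ring (insert x S0)"
  unfolding A_def by (rule gen_ring_sub) (auto intro: gen_ring.base)

lemma dir1: assumes t: "t \<noteq> 0" shows "Yj \<in> gen_ring (insert Zj S0)"
proof -
  obtain k1 where k1: "\<And>z. X (e 1) ^ bb * (X (e j) * z) = X (e j) * (v powi k1 * X (e 1) ^ bb * z)"
    using QC_move[OF X1b] by blast
  obtain k2 where k2: "\<And>z. u * (X (e j) * z) = X (e j) * (v powi k2 * u * z)"
    using QC_move[OF u_QC[OF t]] by blast
  define y where "y = v powi k1 * X (e 1) ^ bb * Zj - v powi k2 * u * Yj"
  have "X (e j) * y = X (e 1) ^ bb * Z - u * W"
    unfolding y_def Z_def W_def k1 k2 by (simp add: right_diff_distrib)
  then have yA: "y \<in> A" using D1[OF t] J_cancel by metis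
  have inv: "(X (- w) * v powi (- \<kappa> - k2)) * (v powi k2 * u) = 1"
  proof -
    have "(X (- w) * v powi (- \<kappa> - k2)) * (v powi k2 * u) = X (- w) * (v powi (- \<kappa> - k2) * v powi k2 * v powi \<kappa>) * X w"
      unfolding u_def by (simp add: mult.assoc)
    also have "v powi (- \<kappa> - k2) * v powi k2 * v powi \<kappa> = 1" by (simp add: vpow_add)
    also have "X (- w) * 1 * X w = 1" using Xinv2[OF w_in] by (simp only: mult_1_right)
    finally show ?thesis .
  qed
  have "Yj = (X (- w) * v powi (- \<kappa> - k2)) * (v powi k2 * u * Yj)"
    using inv by (simp add: mult.assoc[symmetric])
  also have "v powi k2 * u * Yj = v powi k1 * X (e 1) ^ bb * Zj - y" unfolding y_def by simp
  finally have eq: "Yj = X (- w) * v powi (- \<kappa> - k2) * (v powi k1 * X (e 1) ^ bb * Zj - y)" .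
  let ?R = "gen_ring (insert Zj S0)"
  have "X (- w) \<in> ?R" "v powi (- \<kappa> - k2) \<in> ?R" "v powi k1 \<in> ?R" "X (e 1) ^ bb \<in> ?R" "y \<in> ?R"
    using A_sub XmwA[OF t] vpow_A X1pow_A yA by blast+
  moreover have "Zj \<in> ?R" by (rule gen_ring.base) simp
  ultimately show ?thesis unfolding eq by (intro gen_ring.mult gen_ring_diff) auto
qed

lemma dir2: assumes t: "t \<noteq> 0" shows "Zj \<in> gen_ring (insert Yj S0)"
proof -
  obtain \<kappa>' where PXb: "Y1 ^ bb * X (e 1) ^ bb - v powi \<kappa>' * X (sm (int bb) \<Gamma>) \<in> J" using PX[OF t] by blast
  have YD: "Y1 ^ bb * (X (e 1) ^ bb * Z - u * W) \<in> J" by (rule J_left_Y1pow[OF D1[OF t]])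
  have PZ: "(Y1 ^ bb * X (e 1) ^ bb - v powi \<kappa>' * X (sm (int bb) \<Gamma>)) * Z \<in> J" by (rule J_right[OF PXb Z_A[OF t]])
  have "v powi \<kappa>' * X (sm (int bb) \<Gamma>) * Z - Y1 ^ bb * u * W =
      Y1 ^ bb * (X (e 1) ^ bb * Z - u * W) - (Y1 ^ bb * X (e 1) ^ bb - v powi \<kappa>' * X (sm (int bb) \<Gamma>)) * Z"
    by (simp add: algebra_simps)
  also have "\<dots> \<in> J" by (rule J_diff[OF YD PZ])
  finally have mem: "v powi \<kappa>' * X (sm (int bb) \<Gamma>) * Z - Y1 ^ bb * u * W \<in> J" .
  have sGin: "vec_in m (sm (int bb) \<Gamma>)" by auto
  have sGA: "X (sm (int bb) \<Gamma>) \<in> A" "X (- sm (int bb) \<Gamma>) \<in> A"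
    using XinA[OF sGin] XinA[OF vec_in_uminus[OF sGin]] Gamma_1 Gamma_j[OF t] by simp_all
  have q1: "v powi \<kappa>' * X (sm (int bb) \<Gamma>) \<in> QC" by (rule QC_mult[OF QC_v QC_X[OF sGin sGA(1)]])
  have q2: "Y1 ^ bb * u \<in> QC" by (rule QC_mult[OF QC_pow[OF QC_Y1] u_QC[OF t]])
  obtain k3 where k3: "\<And>z. (v powi \<kappa>' * X (sm (int bb) \<Gamma>)) * (X (e j) * z) = X (e j) * (v powi k3 * (v powi \<kappa>' * X (sm (int bb) \<Gamma>)) * z)"
    using QC_move[OF q1] by blast
  obtain k4 where k4: "\<And>z. (Y1 ^ bb * u) * (X (e j) * z) = X (e j) * (v powi k4 * (Y1 ^ bb * u) * z)"
    using QC_move[OF q2] by blast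
  define y where "y = v powi k3 * (v powi \<kappa>' * X (sm (int bb) \<Gamma>)) * Zj - v powi k4 * (Y1 ^ bb * u) * Yj"
  have "X (e j) * y = v powi \<kappa>' * X (sm (int bb) \<Gamma>) * Z - Y1 ^ bb * u * W"
    unfolding y_def Z_def W_def right_diff_distrib k3[symmetric] k4[symmetric] by (simp add: mult.assoc)
  then have yA: "y \<in> A" using mem J_cancel by metis
  have inv: "(X (- sm (int bb) \<Gamma>) * v powi (- \<kappa>' - k3)) * (v powi k3 * (v powi \<kappa>' * X (sm (int bb) \<Gamma>))) = 1"
  proof -
    have "(X (- sm (int bb) \<Gamma>) * v powi (- \<kappa>' - k3)) * (v powi k3 * (v powi \<kappa>' * X (sm (int bb) \<Gamma>)))
       = X (- sm (int bb) \<Gamma>) * (v powi (- \<kappa>' - k3) * v powi k3 * v powi \<kappa>') * X (sm (int bb) \<Gamma>)"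
      by (simp add: mult.assoc)
    also have "v powi (- \<kappa>' - k3) * v powi k3 * v powi \<kappa>' = 1" by (simp add: vpow_add)
    also have "X (- sm (int bb) \<Gamma>) * 1 * X (sm (int bb) \<Gamma>) = 1" using Xinv2[OF sGin] by (simp only: mult_1_right)
    finally show ?thesis .
  qed
  have "Zj = (X (- sm (int bb) \<Gamma>) * v powi (- \<kappa>' - k3)) * (v powi k3 * (v powi \<kappa>' * X (sm (int bb) \<Gamma>)) * Zj)"
    using inv by (simp add: mult.assoc[symmetric])
  also have "v powi k3 * (v powi \<kappa>' * X (sm (int bb) \<Gamma>)) * Zj = y + v powi k4 * (Y1 ^ bb * u) * Yj"
    unfolding y_def by simp
  finally have eq: "Zj = X (- sm (int bb) \<Gamma>) * v powi (- \<kappa>' - k3) * (y + v powi k4 * (Y1 ^ bb * u) * Yj)" .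
  let ?R = "gen_ring (insert Yj S0)"
  have a1: "X (- sm (int bb) \<Gamma>) \<in> ?R" and a2: "v powi (- \<kappa>' - k3) \<in> ?R" and a3: "v powi k4 \<in> ?R"
    and a4: "Y1 ^ bb * u \<in> ?R" and a5: "y \<in> ?R"
    using A_sub sGA vpow_A yA A_mult[OF A_power[OF A_Y1] u_A[OF t]] by blast+
  have a6: "Yj \<in> ?R" by (rule gen_ring.base) simp
  show ?thesis unfolding eq
    by (rule gen_ring.mult[OF gen_ring.mult[OF a1 a2] gen_ring.add[OF a5 gen_ring.mult[OF gen_ring.mult[OF a3 a4] a6]]])
qed

theorem final:
  "ZP_adj m n v X ({X (unitv 1), Y1, X (unitv j), Zj} \<union> INV)
 = ZP_adj m n v X ({X (unitv 1), Y1, X (unitv j), Yj} \<union> INV)"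
proof -
  have s1: "ZP m n v X \<union> ({X (unitv 1), Y1, X (unitv j), Zj} \<union> INV) = insert Zj S0"
    unfolding S0_def by auto
  have s2: "ZP m n v X \<union> ({X (unitv 1), Y1, X (unitv j), Yj} \<union> INV) = insert Yj S0"
    unfolding S0_def by auto
  show ?thesis
  proof (cases "t = 0")
    case True then show ?thesis using t0_case by simp
  next
    case False
    have "gen_ring (insert Zj S0) = gen_ring (insert Yj S0)"
      by (rule ring_swap) (use dir1[OF False] dir2[OF False] in \<open>auto intro: gen_ring.base\<close>)
    then show ?thesis unfolding ZP_adj_def s1 s2 .
  qed
qed

end

theorem proposition4p7:
  fixes m n j :: nat
    and L0 B0 :: "nat \<Rightarrow> nat \<Rightarrow> int"
    and d :: "nat \<Rightarrow> int"
    and h :: "nat \<Rightarrow> nat \<Rightarrow> 'f::division_ring"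
    and v :: 'f
    and X X' :: "(nat \<Rightarrow> int) \<Rightarrow> 'f"
    and eps :: int
  assumes "2 \<le> n" and "n \<le> m"
    and "compatible_pair m n L0 B0"
    and "\<forall>k\<in>{1..n}. d k > 0 \<and> (\<forall>p\<in>{1..m}. d k dvd B0 p k)"
    and "\<forall>k\<in>{1..n}. \<forall>r\<in>{0..nat (d k)}. h k r \<in> laurent v \<and> h k r = h k (nat (d k) - r)"
    and "\<forall>k\<in>{1..n}. h k 0 = 1 \<and> h k (nat (d k)) = 1"
    and "qtorus_embedding m L0 v X"
    and "eps = 1 \<or> eps = -1"
    and "qtorus_rel m (mut_Lambda m L0 B0 1 eps) v X'"
    and "X' (unitv 1) = mut_var m B0 d h X 1"
    and "\<forall>k\<in>{1..m}. k \<noteq> 1 \<longrightarrow> X' (unitv k) = X (unitv k)"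
    and "j \<in> {2..n}"
  shows "ZP_adj m n v X
           ({X (unitv 1), mut_var m B0 d h X 1, X (unitv j),
             mut_var m (mut_B m n B0 1 eps) d h X' j}
            \<union> {y. \<exists>k\<in>{2..n}. k \<noteq> j \<and> (y = X (unitv k) \<or> y = inverse (X (unitv k)))})
       = ZP_adj m n v X
           ({X (unitv 1), mut_var m B0 d h X 1, X (unitv j), mut_var m B0 d h X j}
            \<union> {y. \<exists>k\<in>{2..n}. k \<noteq> j \<and> (y = X (unitv k) \<or> y = inverse (X (unitv k)))})"
proof -
  interpret S m n j L0 B0 d h v X X' eps by (rule S.intro[OF assms])
  show ?thesis by (rule final)
qed

end
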